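(* Let $0<s<1$, let $K$ satisfy the standing assumptions below together with condition (B) for some $\sigma\in(0,s)$, let $1+\sigma-s<p<\infty$, and let $n$ be a nonnegative integer. There is a constant $C>0$ (independent of $f$ and $z$) such that for every $f\in B_p^K(s)$ and every $z\in\mathbb{D}$, $$|f^{(n)}(z)|\le C\,\|f\|_{B_p^K(s)}\left(\frac{K(1-|z|^2)}{(1-|z|^2)^{pn+s}}\right)^{1/p}.$$
   Context: $\mathbb{D}$ is the open unit disc, $H(\mathbb{D})$ the analytic functions on $\mathbb{D}$, $dA$ the normalized area measure, $\varphi_a(z)=\frac{a-z}{1-\bar az}$. Standing assumptions: $K:[0,\infty)\to[0,\infty)$ is nondecreasing, right-continuous, not identically zero, and with $\varphi_K(x)=\sup_{0<t\le 1}K(tx)/K(t)$ satisfies $\int_0^1\frac{\varphi_K(x)}{x}\,dx<\infty$. Condition (B) for $\sigma>0$: $\int_1^\infty\frac{\varphi_K(x)}{x^{1+\sigma}}\,dx<\infty$. $\|f\|_{B_p(s)}^p=|f(0)|^p+\int_{\mathbb{D}}|f'(z)|^p(1-|z|^2)^{p-2+s}\,dA(z)$ and $\|f\|_{B_p^K(s)}^p=|f(0)|^p+\sup_{a\in\mathbb{D}}\frac{(1-|a|^2)^s}{K(1-|a|^2)}\|f\circ\varphi_a-f(a)\|_{B_p(s)}^p$; $B_p^K(s)$ is the set of $f\in H(\mathbb{D})$ with this quantity finite. *)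

theory Defs
  imports "HOL-Analysis.Analysis"
begin

definition udisc :: "complex set" where
  "udisc = ball 0 1"

definition disc_aut :: "complex \<Rightarrow> complex \<Rightarrow> complex" where
  "disc_aut a z = (a - z) / (1 - cnj a * z)"

definition phiK :: "(real \<Rightarrow> real) \<Rightarrow> real \<Rightarrow> ennreal" where
  "phiK K x = (SUP t\<in>{0<..1}. ennreal (K (t * x) / K t))"

definition standing_K :: "(real \<Rightarrow> real) \<Rightarrow> bool" where
  "standing_K K \<longleftrightarrow>
     (\<forall>x\<ge>0. K x \<ge> 0) \<and> mono_on {0..} K \<and>
     (\<forall>x\<ge>0. continuous (at_right x) K) \<and> (\<exists>x\<ge>0. K x \<noteq> 0) \<and>
     (\<forall>t>0. K t > 0) \<and>
     (\<integral>\<^sup>+ x. indicator {0<..<1} x * phiK K x / ennreal x \<partial>lborel) < \<infinity>"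

definition condB :: "(real \<Rightarrow> real) \<Rightarrow> real \<Rightarrow> bool" where
  "condB K \<sigma> \<longleftrightarrow>
     (\<integral>\<^sup>+ x. indicator {1<..} x * phiK K x / ennreal (x powr (1 + \<sigma>)) \<partial>lborel) < \<infinity>"

text \<open>p-th power of the B_p(s) norm, with normalized area measure dA = dx dy / pi.\<close>
definition Bp_normp :: "real \<Rightarrow> real \<Rightarrow> (complex \<Rightarrow> complex) \<Rightarrow> ennreal" where
  "Bp_normp p s f = ennreal (cmod (f 0) powr p) +
     (\<integral>\<^sup>+ z. indicator udisc z *
        ennreal (cmod (deriv f z) powr p * (1 - (cmod z)\<^sup>2) powr (p - 2 + s) / pi) \<partial>lborel)"

definition BpK_normp :: "(real \<Rightarrow> real) \<Rightarrow> real \<Rightarrow> real \<Rightarrow> (complex \<Rightarrow> complex) \<Rightarrow> ennreal" where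
  "BpK_normp K p s f = ennreal (cmod (f 0) powr p) +
     (SUP a\<in>udisc. ennreal ((1 - (cmod a)\<^sup>2) powr s / K (1 - (cmod a)\<^sup>2)) *
        Bp_normp p s (\<lambda>z. f (disc_aut a z) - f a))"

definition in_BpK :: "(real \<Rightarrow> real) \<Rightarrow> real \<Rightarrow> real \<Rightarrow> (complex \<Rightarrow> complex) \<Rightarrow> bool" where
  "in_BpK K p s f \<longleftrightarrow> f holomorphic_on udisc \<and> BpK_normp K p s f < \<infinity>"

text \<open>The B_p^K(s) norm (real, meaningful for members of the space).\<close>
definition BpK_norm :: "(real \<Rightarrow> real) \<Rightarrow> real \<Rightarrow> real \<Rightarrow> (complex \<Rightarrow> complex) \<Rightarrow> real" where
  "BpK_norm K p s f = enn2real (BpK_normp K p s f) powr (1 / p)"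

end

theory Submission
  imports Defs "HOL-Complex_Analysis.Complex_Analysis"
begin


lemma measurable_Complex_gen[measurable (raw)]:
  assumes "f \<in> borel_measurable M" "g \<in> borel_measurable M"
  shows "(\<lambda>x. Complex (f x) (g x)) \<in> borel_measurable M"
  using assms by (subst borel_measurable_complex_iff) simp

lemma measurable_Complex_pair[measurable]:
  "(\<lambda>p::real\<times>real. Complex (fst p) (snd p)) \<in> borel_measurable borel"
proof -
  have "continuous_on UNIV (\<lambda>p::real\<times>real. Complex (fst p) (snd p))"
    unfolding Complex_eq by (intro continuous_intros)
  then show ?thesis by (rule borel_measurable_continuous_onI)
qed

lemma measurable_Complex_pair'[measurable]:
  "(\<lambda>p::real\<times>real. Complex (fst p) (snd p)) \<in> borel_measurable (lborel \<Otimes>\<^sub>M lborel)"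
  using measurable_Complex_pair by (simp add: lborel_prod)

lemma lborel_complex_eq:
  "(lborel :: complex measure) = distr (lborel \<Otimes>\<^sub>M lborel) borel (\<lambda>p. Complex (fst p) (snd p))"
proof (rule lborel_eqI)
  fix l u :: complex
  assume le: "\<And>b. b \<in> Basis \<Longrightarrow> l \<bullet> b \<le> u \<bullet> b"
  have le1: "Re l \<le> Re u" "Im l \<le> Im u" using le[of 1] le[of \<i>] by (auto simp: Basis_complex_def inner_complex_def)
  have pre: "(\<lambda>p. Complex (fst p) (snd p)) -` box l u \<inter> space (lborel \<Otimes>\<^sub>M lborel)
      = {Re l<..<Re u} \<times> {Im l<..<Im u}"
    by (auto simp: in_box_complex_iff space_pair_measure)
  have "emeasure (distr (lborel \<Otimes>\<^sub>M lborel) borel (\<lambda>p. Complex (fst p) (snd p))) (box l u)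
     = emeasure (lborel \<Otimes>\<^sub>M lborel) ({Re l<..<Re u} \<times> {Im l<..<Im u})"
    by (subst emeasure_distr) (auto simp: pre simp del: space_borel)
  also have "\<dots> = ennreal ((Re u - Re l) * (Im u - Im l))"
    using le1 by (simp add: lborel.emeasure_pair_measure_Times ennreal_mult)
  also have "\<dots> = (\<Prod>b\<in>Basis. (u - l) \<bullet> b)"
    by (simp add: Basis_complex_def inner_complex_def)
  finally show "emeasure (distr (lborel \<Otimes>\<^sub>M lborel) borel (\<lambda>p. Complex (fst p) (snd p))) (box l u) = (\<Prod>b\<in>Basis. (u - l) \<bullet> b)" .
qed simp

lemma nn_integral_complex_xy:
  assumes [measurable]: "G \<in> borel_measurable borel"
  shows "(\<integral>\<^sup>+z. G z \<partial>lborel) = (\<integral>\<^sup>+x. (\<integral>\<^sup>+y. G (Complex x y) \<partial>lborel) \<partial>lborel)"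
    and "(\<integral>\<^sup>+z. G z \<partial>lborel) = (\<integral>\<^sup>+y. (\<integral>\<^sup>+x. G (Complex x y) \<partial>lborel) \<partial>lborel)"
proof -
  have eq: "(\<integral>\<^sup>+z. G z \<partial>lborel) = (\<integral>\<^sup>+p. G (Complex (fst p) (snd p)) \<partial>(lborel \<Otimes>\<^sub>M lborel))"
    by (subst lborel_complex_eq) (subst nn_integral_distr, auto)
  show "(\<integral>\<^sup>+z. G z \<partial>lborel) = (\<integral>\<^sup>+x. (\<integral>\<^sup>+y. G (Complex x y) \<partial>lborel) \<partial>lborel)"
    unfolding eq using lborel.nn_integral_fst[of "\<lambda>p. G (Complex (fst p) (snd p))" lborel] by simp
  show "(\<integral>\<^sup>+z. G z \<partial>lborel) = (\<integral>\<^sup>+y. (\<integral>\<^sup>+x. G (Complex x y) \<partial>lborel) \<partial>lborel)"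
    unfolding eq using lborel_pair.nn_integral_snd[of "\<lambda>p. G (Complex (fst p) (snd p))"] by simp
qed



lemma contour_integral_linepath_same_Im:
  assumes "Im z = c" "Im z' = c" "Re z = a" "Re z' = b" "a < b"
  shows   "contour_integral (linepath z z') f = integral {a..b} (\<lambda>x. f (Complex x c))"
proof -
  have zz': "z = Complex a c" "z' = Complex b c"
    using assms by (auto simp: complex_eq_iff)
  have "contour_integral (linepath z z') f =
         (z' - z) * integral {0..1} (\<lambda>x. f (linepath z z' x))"
    by (simp add: contour_integral_integral)
  also have "z' - z = of_real (b - a)"
    by (simp add: zz' Complex_eq algebra_simps)
  also have "integral {0..1} (\<lambda>x. f (linepath z z' x)) =
             integral {0..1} (\<lambda>x. f (Complex (linepath a b x) c))"
    by (simp add: linepath_def Complex_eq scaleR_conv_of_real algebra_simps zz')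
  also have "\<dots> = integral {0..(b - a) / (b - a)} (\<lambda>x. f (Complex (a + (b - a) * x) c))"
    using \<open>a < b\<close> by (simp add: algebra_simps linepath_def)
  also have "{0..(b - a) / (b - a)} = (\<lambda>x. x / (b - a)) ` {0..b - a}"
    using \<open>a < b\<close> by simp
  also have "integral \<dots> (\<lambda>x. f (Complex (a + (b - a) * x) c)) =
             integral {a-a..b-a} (\<lambda>x. f (Complex (x + a) c)) / of_real (b - a)"
    using \<open>a < b\<close> by (subst integral_stretch_real) (auto simp: scaleR_conv_of_real add_ac)
  also have "\<dots> = integral {a..b} (\<lambda>x. f (Complex x c)) / of_real (b - a)"
    by (subst integral_shift_real_ivl) (rule refl)
  finally show ?thesis
    using \<open>a < b\<close> by simp
qed

lemma side_est:
  fixes P :: "real \<Rightarrow> complex" and h :: "complex \<Rightarrow> complex"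
  assumes "continuous_on {-t..t} (\<lambda>x. h (P x))" "continuous_on {-t..t} P"
    "\<And>x. x \<in> {-t..t} \<Longrightarrow> t \<le> cmod (P x)" "t > 0"
  shows "cmod (integral {-t..t} (\<lambda>x. h (P x) / P x)) \<le> integral {-t..t} (\<lambda>x. cmod (h (P x))) / t"
proof -
  have nz: "P x \<noteq> 0" if "x \<in> {-t..t}" for x using assms(3)[OF that] assms(4) by auto
  have c1: "continuous_on {-t..t} (\<lambda>x. h (P x) / P x)"
    using assms(1,2) nz by (intro continuous_intros) auto
  have c2: "continuous_on {-t..t} (\<lambda>x. cmod (h (P x)) / t)"
    using assms(1,4) by (intro continuous_intros) auto
  have "cmod (integral {-t..t} (\<lambda>x. h (P x) / P x)) \<le> integral {-t..t} (\<lambda>x. cmod (h (P x)) / t)"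
  proof (rule integral_norm_bound_integral)
    show "(\<lambda>x. h (P x) / P x) integrable_on {-t..t}" using c1 by (rule integrable_continuous_interval)
    show "(\<lambda>x. cmod (h (P x)) / t) integrable_on {-t..t}" using c2 by (rule integrable_continuous_interval)
    fix x assume x: "x \<in> {-t..t}"
    have "cmod (h (P x) / P x) = cmod (h (P x)) / cmod (P x)" by (simp add: norm_divide)
    also have "\<dots> \<le> cmod (h (P x)) / t"
      using assms(3)[OF x] assms(4) by (intro divide_left_mono) (auto intro!: mult_pos_pos)
    finally show "norm (h (P x) / P x) \<le> cmod (h (P x)) / t" by simp
  qed
  also have "\<dots> = integral {-t..t} (\<lambda>x. cmod (h (P x))) / t"
    by (simp add: integral_divide)
  finally show ?thesis .
qed

lemma int_to_nn:
  fixes \<phi> :: "real \<Rightarrow> real"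
  assumes "continuous_on {a..b} \<phi>" "\<And>x. x \<in> {a..b} \<Longrightarrow> 0 \<le> \<phi> x"
  shows "ennreal (integral {a..b} \<phi>) = (\<integral>\<^sup>+x. ennreal (\<phi> x) * indicator {a..b} x \<partial>lborel)"
  using nn_integral_has_integral_lebesgue'[OF assms(2) integrable_integral[OF integrable_continuous_interval[OF assms(1)]]]
  by simp



lemma square_t:
  fixes h :: "complex \<Rightarrow> complex" and \<delta> t :: real
  assumes hol: "h holomorphic_on cbox (Complex (-\<delta>) (-\<delta>)) (Complex \<delta> \<delta>)" and t: "0 < t" "t \<le> \<delta>"
  shows "ennreal (2*pi*t*cmod (h 0)) \<le>
     (\<integral>\<^sup>+x. ennreal (cmod (h (Complex x (-t)))) * indicator {-\<delta>..\<delta>} x \<partial>lborel)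
   + (\<integral>\<^sup>+y. ennreal (cmod (h (Complex t y))) * indicator {-\<delta>..\<delta>} y \<partial>lborel)
   + (\<integral>\<^sup>+x. ennreal (cmod (h (Complex x t))) * indicator {-\<delta>..\<delta>} x \<partial>lborel)
   + (\<integral>\<^sup>+y. ennreal (cmod (h (Complex (-t) y))) * indicator {-\<delta>..\<delta>} y \<partial>lborel)"
proof -
  define Q where "Q = cbox (Complex (-\<delta>) (-\<delta>)) (Complex \<delta> \<delta>)"
  define a1 where "a1 = Complex (-t) (-t)"
  define a2 where "a2 = Complex t (-t)"
  define a3 where "a3 = Complex t t"
  define a4 where "a4 = Complex (-t) t"
  define F where "F = (\<lambda>w. h w / w)"
  have cont: "continuous_on Q h" using hol unfolding Q_def by (rule holomorphic_on_imp_continuous_on)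
  have inQ: "Complex x y \<in> Q" if "\<bar>x\<bar> \<le> \<delta>" "\<bar>y\<bar> \<le> \<delta>" for x y
    using that by (auto simp: Q_def in_cbox_complex_iff)
  have sub: "cbox a1 a3 \<subseteq> Q" using t by (auto simp: Q_def a1_def a3_def in_cbox_complex_iff)
  have zbox: "0 \<in> box a1 a3" using t by (auto simp: a1_def a3_def in_box_complex_iff)
  have pim: "path_image (rectpath a1 a3) = cbox a1 a3 - box a1 a3"
    using t by (intro path_image_rectpath_cbox_minus_box) (auto simp: a1_def a3_def)
  have pim2: "path_image (rectpath a1 a3) = closed_segment a1 a2 \<union> closed_segment a2 a3 \<union> closed_segment a3 a4 \<union> closed_segment a4 a1"
    by (simp add: rectpath_def Let_def path_image_join Un_assoc a1_def a2_def a3_def a4_def)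
  have pQ: "path_image (rectpath a1 a3) \<subseteq> Q - {0}" using pim sub zbox by auto
  have contF: "continuous_on (Q - {0}) F"
    unfolding F_def by (intro continuous_intros continuous_on_subset[OF cont]) auto
  have cs: "continuous_on (closed_segment a1 a2) F" "continuous_on (closed_segment a2 a3) F"
           "continuous_on (closed_segment a3 a4) F" "continuous_on (closed_segment a4 a1) F"
           "continuous_on (closed_segment a4 a3) F" "continuous_on (closed_segment a1 a4) F"
    using pQ pim2 by (auto intro: continuous_on_subset[OF contF] simp: closed_segment_commute)
  have cif: "(F has_contour_integral (2 * complex_of_real pi * \<i> * winding_number (rectpath a1 a3) 0 * h 0)) (rectpath a1 a3)"
  proof -
    have "convex Q" by (simp add: Q_def convex_box)
    moreover have "h holomorphic_on Q" using hol by (simp add: Q_def)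
    moreover have "0 \<in> interior Q" using zbox sub by (metis interior_mono subsetD box_subset_cbox Q_def interior_cbox)
    ultimately show ?thesis
      using Cauchy_integral_formula_convex_simple[of Q h 0 "rectpath a1 a3"] pQ unfolding F_def by auto
  qed
  have wn: "winding_number (rectpath a1 a3) 0 = 1" using zbox by (rule winding_number_rectpath)
  have h1: "(F has_contour_integral contour_integral (linepath a1 a2) F) (linepath a1 a2)"
    using cs(1) by (intro has_contour_integral_integral contour_integrable_continuous_linepath)
  have h2: "(F has_contour_integral contour_integral (linepath a2 a3) F) (linepath a2 a3)"
    using cs(2) by (intro has_contour_integral_integral contour_integrable_continuous_linepath)
  have h3: "(F has_contour_integral contour_integral (linepath a3 a4) F) (linepath a3 a4)"
    using cs(3) by (intro has_contour_integral_integral contour_integrable_continuous_linepath)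
  have h4: "(F has_contour_integral contour_integral (linepath a4 a1) F) (linepath a4 a1)"
    using cs(4) by (intro has_contour_integral_integral contour_integrable_continuous_linepath)
  have hall: "(F has_contour_integral (contour_integral (linepath a1 a2) F + (contour_integral (linepath a2 a3) F
       + (contour_integral (linepath a3 a4) F + contour_integral (linepath a4 a1) F)))) (rectpath a1 a3)"
    unfolding rectpath_def Let_def
    using h1 h2 h3 h4
    by (auto simp: a1_def a2_def a3_def a4_def intro!: has_contour_integral_join valid_path_join)
  have eq: "2 * complex_of_real pi * \<i> * h 0 = contour_integral (linepath a1 a2) F + (contour_integral (linepath a2 a3) F
       + (contour_integral (linepath a3 a4) F + contour_integral (linepath a4 a1) F))"
    using has_contour_integral_unique[OF cif hall] wn by simp
  define J1 where "J1 = integral {-t..t} (\<lambda>x. F (Complex x (-t)))"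
  define J2 where "J2 = integral {-t..t} (\<lambda>y. F (Complex t y))"
  define J3 where "J3 = integral {-t..t} (\<lambda>x. F (Complex x t))"
  define J4 where "J4 = integral {-t..t} (\<lambda>y. F (Complex (-t) y))"
  have C1: "contour_integral (linepath a1 a2) F = J1"
    unfolding J1_def using t by (intro contour_integral_linepath_same_Im) (auto simp: a1_def a2_def)
  have C2: "contour_integral (linepath a2 a3) F = \<i> * J2"
    unfolding J2_def using t by (intro contour_integral_linepath_same_Re) (auto simp: a3_def a2_def)
  have C3: "contour_integral (linepath a3 a4) F = - J3"
    unfolding J3_def using t cs(3)
    by (subst contour_integral_reverse_linepath) (auto simp: a3_def a4_def intro!: contour_integral_linepath_same_Im)
  have C4: "contour_integral (linepath a4 a1) F = - (\<i> * J4)"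
    unfolding J4_def using t cs(4)
    by (subst contour_integral_reverse_linepath) (auto simp: a1_def a4_def intro!: contour_integral_linepath_same_Re)
  have "2*pi*cmod (h 0) = cmod (J1 + (\<i> * J2 + (- J3 + - (\<i> * J4))))"
    using arg_cong[OF eq, of cmod] C1 C2 C3 C4 by (simp add: norm_mult)
  also have "\<dots> \<le> cmod J1 + cmod J2 + cmod J3 + cmod J4"
    by (metis (no_types, lifting) add.assoc norm_triangle_le norm_mult norm_ii mult_1 norm_minus_cancel add_mono order_refl)
  finally have main: "2*pi*cmod (h 0) \<le> cmod J1 + cmod J2 + cmod J3 + cmod J4" .
  have ch: "continuous_on {-t..t} (\<lambda>x. h (P x))" if "continuous_on {-t..t} P" "\<And>x. x \<in> {-t..t} \<Longrightarrow> P x \<in> Q" for P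
    using that by (intro continuous_on_compose2[OF cont]) auto
  have cP: "continuous_on {-t..t} (\<lambda>x. Complex x c)" "continuous_on {-t..t} (\<lambda>x. Complex c x)" for c
    unfolding Complex_eq by (intro continuous_intros)+
  have est: "cmod (integral {-t..t} (\<lambda>x. h (P x) / P x)) \<le> integral {-t..t} (\<lambda>x. cmod (h (P x))) / t"
    if "continuous_on {-t..t} P" "\<And>x. x \<in> {-t..t} \<Longrightarrow> P x \<in> Q" "\<And>x. x \<in> {-t..t} \<Longrightarrow> t \<le> cmod (P x)" for P
    using that t by (intro side_est ch) auto
  have mod1: "t \<le> cmod (Complex x c)" "t \<le> cmod (Complex c x)" if "\<bar>c\<bar> = t" for x c
    using that abs_Im_le_cmod[of "Complex x c"] abs_Re_le_cmod[of "Complex c x"] by auto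
  have inQ': "Complex x c \<in> Q" "Complex c x \<in> Q" if "\<bar>c\<bar> = t" "x \<in> {-t..t}" for x c
    using that t by (auto intro!: inQ)
  define I1 where "I1 = integral {-t..t} (\<lambda>x. cmod (h (Complex x (-t))))"
  define I2 where "I2 = integral {-t..t} (\<lambda>y. cmod (h (Complex t y)))"
  define I3 where "I3 = integral {-t..t} (\<lambda>x. cmod (h (Complex x t)))"
  define I4 where "I4 = integral {-t..t} (\<lambda>y. cmod (h (Complex (-t) y)))"
  have e1: "cmod J1 \<le> I1 / t" unfolding J1_def I1_def F_def
    using t by (intro est[of "\<lambda>x. Complex x (-t)"] cP inQ' mod1) auto
  have e2: "cmod J2 \<le> I2 / t" unfolding J2_def I2_def F_def
    using t by (intro est[of "\<lambda>x. Complex t x"] cP inQ' mod1) auto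
  have e3: "cmod J3 \<le> I3 / t" unfolding J3_def I3_def F_def
    using t by (intro est[of "\<lambda>x. Complex x t"] cP inQ' mod1) auto
  have e4: "cmod J4 \<le> I4 / t" unfolding J4_def I4_def F_def
    using t by (intro est[of "\<lambda>x. Complex (-t) x"] cP inQ' mod1) auto
  have "2*pi*t*cmod (h 0) \<le> t * (I1/t + I2/t + I3/t + I4/t)"
    using main e1 e2 e3 e4 t by (simp add: mult.assoc mult_left_mono)
  also have "\<dots> = I1 + I2 + I3 + I4" using t by (simp add: field_simps)
  finally have main2: "2*pi*t*cmod (h 0) \<le> I1 + I2 + I3 + I4" .
  have nn: "ennreal (integral {-t..t} (\<lambda>x. cmod (h (P x)))) \<le> (\<integral>\<^sup>+x. ennreal (cmod (h (P x))) * indicator {-\<delta>..\<delta>} x \<partial>lborel)"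
    if "continuous_on {-t..t} P" "\<And>x. x \<in> {-t..t} \<Longrightarrow> P x \<in> Q" for P
  proof -
    have "ennreal (integral {-t..t} (\<lambda>x. cmod (h (P x)))) = (\<integral>\<^sup>+x. ennreal (cmod (h (P x))) * indicator {-t..t} x \<partial>lborel)"
      using that by (intro int_to_nn continuous_intros ch) auto
    also have "\<dots> \<le> (\<integral>\<^sup>+x. ennreal (cmod (h (P x))) * indicator {-\<delta>..\<delta>} x \<partial>lborel)"
      using t by (intro nn_integral_mono mult_left_mono) (auto simp: indicator_def)
    finally show ?thesis .
  qed
  have intI: "(\<lambda>x. cmod (h (P x))) integrable_on {-t..t}"
    if "continuous_on {-t..t} P" "\<And>x. x \<in> {-t..t} \<Longrightarrow> P x \<in> Q" for P
    using that by (intro integrable_continuous_interval continuous_intros ch) auto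
  have I_nonneg: "0 \<le> I1" "0 \<le> I2" "0 \<le> I3" "0 \<le> I4"
    unfolding I1_def I2_def I3_def I4_def using t
    by (auto intro!: integral_nonneg intI[of "\<lambda>x. Complex x (-t)"] intI[of "\<lambda>x. Complex x t"]
       intI[of "\<lambda>x. Complex t x"] intI[of "\<lambda>x. Complex (-t) x"] cP inQ'(1)[of "-t"] inQ'(1)[of t]
       inQ'(2)[of "-t"] inQ'(2)[of t])
  have "ennreal (2*pi*t*cmod (h 0)) \<le> ennreal (I1 + I2 + I3 + I4)"
    using main2 by (rule ennreal_leI)
  also have "\<dots> = ennreal I1 + ennreal I2 + ennreal I3 + ennreal I4"
    using I_nonneg by (simp add: ennreal_plus)
  also have "\<dots> \<le> (\<integral>\<^sup>+x. ennreal (cmod (h (Complex x (-t)))) * indicator {-\<delta>..\<delta>} x \<partial>lborel)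
   + (\<integral>\<^sup>+y. ennreal (cmod (h (Complex t y))) * indicator {-\<delta>..\<delta>} y \<partial>lborel)
   + (\<integral>\<^sup>+x. ennreal (cmod (h (Complex x t))) * indicator {-\<delta>..\<delta>} x \<partial>lborel)
   + (\<integral>\<^sup>+y. ennreal (cmod (h (Complex (-t) y))) * indicator {-\<delta>..\<delta>} y \<partial>lborel)"
    unfolding I1_def I2_def I3_def I4_def
    using t by (intro add_mono nn cP inQ') auto
  finally show ?thesis .
qed



lemma nn_integral_reflect:
  fixes f :: "real \<Rightarrow> ennreal"
  assumes [measurable]: "f \<in> borel_measurable borel"
  shows "(\<integral>\<^sup>+t. f (-t) \<partial>lborel) = (\<integral>\<^sup>+t. f t \<partial>lborel)"
  using nn_integral_real_affine[of f "-1" 0] by simp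

lemma ennreal_four: "(x::ennreal)+x+x+x = 4*x"
proof -
  have "4*x = (1+1+1+1)*x" by simp
  also have "\<dots> = x+x+x+x" by (simp only: distrib_right mult_1)
  finally show ?thesis by simp
qed

lemma square_mean_L1:
  fixes h :: "complex \<Rightarrow> complex" and \<delta> :: real
  assumes hol: "h holomorphic_on cbox (Complex (-\<delta>) (-\<delta>)) (Complex \<delta> \<delta>)" and d: "0 < \<delta>"
  shows "ennreal (pi * \<delta>^2 * cmod (h 0)) \<le>
     4 * (\<integral>\<^sup>+z. ennreal (indicator (cbox (Complex (-\<delta>) (-\<delta>)) (Complex \<delta> \<delta>)) z * cmod (h z)) \<partial>lborel)"
proof -
  define Q where "Q = cbox (Complex (-\<delta>) (-\<delta>)) (Complex \<delta> \<delta>)"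
  define G where "G = (\<lambda>z. indicator Q z * cmod (h z))"
  have cont: "continuous_on Q h" using hol unfolding Q_def by (rule holomorphic_on_imp_continuous_on)
  have Gm[measurable]: "G \<in> borel_measurable borel"
  proof -
    have "(\<lambda>z. indicator Q z *\<^sub>R cmod (h z)) \<in> borel_measurable borel"
    proof (rule borel_measurable_continuous_on_indicator)
      show "Q \<in> sets borel" by (simp add: Q_def)
      show "continuous_on Q (\<lambda>z. cmod (h z))" by (intro continuous_intros cont)
    qed
    then show ?thesis by (simp add: G_def)
  qed
  have Gm2[measurable]: "(\<lambda>p. ennreal (G (Complex (fst p) (snd p)))) \<in> borel_measurable (lborel \<Otimes>\<^sub>M lborel)"
    by measurable
  define Hs where "Hs = (\<lambda>y. \<integral>\<^sup>+x. ennreal (G (Complex x y)) \<partial>lborel)"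
  define Vs where "Vs = (\<lambda>x. \<integral>\<^sup>+y. ennreal (G (Complex x y)) \<partial>lborel)"
  have Hm[measurable]: "Hs \<in> borel_measurable borel"
    unfolding Hs_def by measurable
  have Vm[measurable]: "Vs \<in> borel_measurable borel"
    unfolding Vs_def by measurable
  have eqH: "(\<integral>\<^sup>+x. ennreal (cmod (h (Complex x y))) * indicator {-\<delta>..\<delta>} x \<partial>lborel) = Hs y"
    if "\<bar>y\<bar> \<le> \<delta>" for y
    unfolding Hs_def G_def using that
    by (intro nn_integral_cong) (auto simp: Q_def in_cbox_complex_iff indicator_def)
  have eqV: "(\<integral>\<^sup>+y. ennreal (cmod (h (Complex x y))) * indicator {-\<delta>..\<delta>} y \<partial>lborel) = Vs x"
    if "\<bar>x\<bar> \<le> \<delta>" for x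
    unfolding Vs_def G_def using that
    by (intro nn_integral_cong) (auto simp: Q_def in_cbox_complex_iff indicator_def)
  have pt: "ennreal (2*pi*t*cmod (h 0)) * indicator {0..\<delta>} t \<le> Hs (-t) + Vs t + Hs t + Vs (-t)" for t
  proof (cases "t \<in> {0<..\<delta>}")
    case True
    then show ?thesis using square_t[OF hol, of t] eqH[of t] eqH[of "-t"] eqV[of t] eqV[of "-t"]
      by (auto simp: indicator_def)
  qed (auto simp: indicator_def)
  have "ennreal (pi * \<delta>^2 * cmod (h 0)) = (\<integral>\<^sup>+t. ennreal (2*pi*t*cmod (h 0)) * indicator {0..\<delta>} t \<partial>lborel)"
  proof -
    have "(\<integral>\<^sup>+t. ennreal (2*pi*t*cmod (h 0)) * indicator {0..\<delta>} t \<partial>lborel)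
        = (\<lambda>t. pi*t^2*cmod (h 0)) \<delta> - (\<lambda>t. pi*t^2*cmod (h 0)) 0"
      using d by (intro nn_integral_FTC_Icc) (auto intro!: derivative_eq_intros simp: power2_eq_square)
    then show ?thesis by simp
  qed
  also have "\<dots> \<le> (\<integral>\<^sup>+t. Hs (-t) + Vs t + Hs t + Vs (-t) \<partial>lborel)"
    by (intro nn_integral_mono pt)
  also have "\<dots> = (\<integral>\<^sup>+t. Hs (-t) \<partial>lborel) + (\<integral>\<^sup>+t. Vs t \<partial>lborel) + (\<integral>\<^sup>+t. Hs t \<partial>lborel) + (\<integral>\<^sup>+t. Vs (-t) \<partial>lborel)"
    by (simp add: nn_integral_add)
  also have "\<dots> = 4 * (\<integral>\<^sup>+z. ennreal (G z) \<partial>lborel)"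
  proof -
    have "(\<integral>\<^sup>+z. ennreal (G z) \<partial>lborel) = (\<integral>\<^sup>+t. Hs t \<partial>lborel)"
      unfolding Hs_def by (rule nn_integral_complex_xy(2)) measurable
    moreover have "(\<integral>\<^sup>+z. ennreal (G z) \<partial>lborel) = (\<integral>\<^sup>+t. Vs t \<partial>lborel)"
      unfolding Vs_def by (rule nn_integral_complex_xy(1)) measurable
    ultimately show ?thesis
      by (simp add: nn_integral_reflect ennreal_four)
  qed
  finally show ?thesis by (simp add: G_def Q_def)
qed



definition sq :: "complex \<Rightarrow> real \<Rightarrow> complex set" where
  "sq v \<delta> = cbox (v - Complex \<delta> \<delta>) (v + Complex \<delta> \<delta>)"

lemma mem_sq: "w \<in> sq v \<delta> \<longleftrightarrow> \<bar>Re w - Re v\<bar> \<le> \<delta> \<and> \<bar>Im w - Im v\<bar> \<le> \<delta>"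
  by (auto simp: sq_def in_cbox_complex_iff)

lemma compact_sq: "compact (sq v \<delta>)" and closed_sq: "closed (sq v \<delta>)"
  by (simp_all add: sq_def compact_imp_closed)

lemma meas_ind_cont:
  assumes "closed S" "continuous_on S f"
  shows "(\<lambda>z. indicator S z * (f z :: real)) \<in> borel_measurable borel"
proof -
  have "(\<lambda>z. indicator S z *\<^sub>R f z) \<in> borel_measurable borel"
    using assms by (intro borel_measurable_continuous_on_indicator) auto
  then show ?thesis by simp
qed

lemma sq_L1:
  fixes h :: "complex \<Rightarrow> complex"
  assumes hol: "h holomorphic_on sq w \<delta>" and d: "0 < \<delta>"
  shows "ennreal (pi * \<delta>^2 * cmod (h w)) \<le> 4 * (\<integral>\<^sup>+z. ennreal (indicator (sq w \<delta>) z * cmod (h z)) \<partial>lborel)"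
proof -
  define Q0 where "Q0 = cbox (Complex (-\<delta>) (-\<delta>)) (Complex \<delta> \<delta>)"
  have img: "(\<lambda>z. w + z) ` Q0 \<subseteq> sq w \<delta>"
    by (auto simp: Q0_def mem_sq in_cbox_complex_iff)
  have hol': "(\<lambda>z. h (w + z)) holomorphic_on Q0"
  proof -
    have "(h \<circ> (\<lambda>z. w + z)) holomorphic_on Q0"
      by (intro holomorphic_on_compose holomorphic_intros holomorphic_on_subset[OF hol img])
    then show ?thesis by (simp add: o_def)
  qed
  have "ennreal (pi * \<delta>^2 * cmod (h w)) \<le> 4 * (\<integral>\<^sup>+z. ennreal (indicator Q0 z * cmod (h (w + z))) \<partial>lborel)"
    using square_mean_L1[OF hol'[unfolded Q0_def] d] by (simp add: Q0_def)
  also have "(\<integral>\<^sup>+z. ennreal (indicator Q0 z * cmod (h (w + z))) \<partial>lborel)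
      = (\<integral>\<^sup>+z. ennreal (indicator (sq w \<delta>) (w + z) * cmod (h (w + z))) \<partial>lborel)"
    by (intro nn_integral_cong) (auto simp: indicator_def Q0_def mem_sq in_cbox_complex_iff)
  also have "\<dots> = (\<integral>\<^sup>+z. ennreal (indicator (sq w \<delta>) z * cmod (h z)) \<partial>distr lborel borel ((+) w))"
  proof -
    have "continuous_on (sq w \<delta>) (\<lambda>z. cmod (h z))"
      using hol by (intro continuous_intros holomorphic_on_imp_continuous_on)
    then have "(\<lambda>z. indicator (sq w \<delta>) z * cmod (h z)) \<in> borel_measurable borel"
      by (intro meas_ind_cont closed_sq)
    then have m: "(\<lambda>z. ennreal (indicator (sq w \<delta>) z * cmod (h z))) \<in> borel_measurable borel" by measurable
    show ?thesis using m by (subst nn_integral_distr) auto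
  qed
  also have "\<dots> = (\<integral>\<^sup>+z. ennreal (indicator (sq w \<delta>) z * cmod (h z)) \<partial>lborel)"
    by (simp add: lborel_distr_plus)
  finally show ?thesis .
qed



lemma emeasure_sq: "0 \<le> R \<Longrightarrow> emeasure lborel (sq v R) = ennreal (4 * R^2)"
  by (simp add: sq_def emeasure_lborel_cbox_eq Basis_complex_def inner_complex_def power2_eq_square)

lemma meas_sq_pow:
  assumes "continuous_on (sq v R) h" "0 < p"
  shows "(\<lambda>z. ennreal (indicator (sq v R) z * cmod (h z) powr p)) \<in> borel_measurable borel"
proof -
  have "continuous_on (sq v R) (\<lambda>z. cmod (h z) powr p)"
    using assms by (intro continuous_on_powr' continuous_intros) auto
  then have "(\<lambda>z. indicator (sq v R) z * cmod (h z) powr p) \<in> borel_measurable borel"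
    by (intro meas_ind_cont closed_sq)
  then show ?thesis by measurable
qed

lemma meas_sq_1:
  assumes "continuous_on (sq v R) h"
  shows "(\<lambda>z. ennreal (indicator (sq v R) z * cmod (h z))) \<in> borel_measurable borel"
proof -
  have "continuous_on (sq v R) (\<lambda>z. cmod (h z))"
    using assms by (intro continuous_intros) auto
  then have "(\<lambda>z. indicator (sq v R) z * cmod (h z)) \<in> borel_measurable borel"
    by (intro meas_ind_cont closed_sq)
  then show ?thesis by measurable
qed

lemma sq_Lp_large:
  fixes h :: "complex \<Rightarrow> complex"
  assumes p: "1 \<le> p" and hol: "h holomorphic_on sq v R" and R: "0 < R"
  shows "ennreal (cmod (h v) powr p * R^2) \<le> ennreal ((8/pi) * (pi/32) powr (1-p)) *
           (\<integral>\<^sup>+z. ennreal (indicator (sq v R) z * cmod (h z) powr p) \<partial>lborel)"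
proof -
  define Q where "Q = sq v R"
  define I where "I = (\<integral>\<^sup>+z. ennreal (indicator Q z * cmod (h z) powr p) \<partial>lborel)"
  define X where "X = cmod (h v)"
  define A where "A = (8/pi) * (pi/32) powr (1-p)"
  have A: "0 < A" by (simp add: A_def)
  have cont: "continuous_on Q h" unfolding Q_def using hol by (rule holomorphic_on_imp_continuous_on)
  show ?thesis
  proof (cases "X = 0")
    case True
    then show ?thesis by (simp add: X_def)
  next
    case False
    then have X: "0 < X" by (simp add: X_def)
    define l where "l = pi * X / 32"
    have l: "0 < l" using X by (simp add: l_def)
    have pwr: "cmod (h z) \<le> l powr (1-p) * cmod (h z) powr p + l" for z
    proof (cases "cmod (h z) \<le> l")
      case True
      then show ?thesis using l by (simp add: add_increasing)
    next
      case False
      then have hz: "l < cmod (h z)" by simp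
      have "cmod (h z) = cmod (h z) powr (1-p) * cmod (h z) powr p"
        using hz l by (simp add: powr_add[symmetric])
      also have "\<dots> \<le> l powr (1-p) * cmod (h z) powr p"
        using hz l p by (intro mult_right_mono powr_mono2') auto
      finally show ?thesis using l by simp
    qed
    have pw: "ennreal (indicator Q z * cmod (h z)) \<le>
        ennreal (l powr (1-p)) * ennreal (indicator Q z * cmod (h z) powr p) + ennreal l * indicator Q z" for z
    proof (cases "z \<in> Q")
      case True
      have "ennreal (cmod (h z)) \<le> ennreal (l powr (1-p) * cmod (h z) powr p + l)"
        using pwr[of z] by (rule ennreal_leI)
      also have "\<dots> = ennreal (l powr (1-p)) * ennreal (cmod (h z) powr p) + ennreal l"
        using l by (simp add: ennreal_plus ennreal_mult)
      finally show ?thesis using True by simp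
    qed simp
    have J: "(\<integral>\<^sup>+z. ennreal (indicator Q z * cmod (h z)) \<partial>lborel) \<le> ennreal (l powr (1-p)) * I + ennreal l * ennreal (4 * R^2)"
    proof -
      have "(\<integral>\<^sup>+z. ennreal (indicator Q z * cmod (h z)) \<partial>lborel) \<le>
         (\<integral>\<^sup>+z. ennreal (l powr (1-p)) * ennreal (indicator Q z * cmod (h z) powr p) + ennreal l * indicator Q z \<partial>lborel)"
        by (intro nn_integral_mono pw)
      also have "\<dots> = ennreal (l powr (1-p)) * I + ennreal l * emeasure lborel Q"
      proof -
        have m[measurable]: "(\<lambda>z. ennreal (indicator Q z * cmod (h z) powr p)) \<in> borel_measurable borel"
          using meas_sq_pow[OF cont[unfolded Q_def], of p] p by (simp add: Q_def)
        have mQ[measurable]: "Q \<in> sets borel" by (simp add: Q_def sq_def)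
        have "(\<integral>\<^sup>+z. ennreal (l powr (1-p)) * ennreal (indicator Q z * cmod (h z) powr p) + ennreal l * indicator Q z \<partial>lborel)
          = (\<integral>\<^sup>+z. ennreal (l powr (1-p)) * ennreal (indicator Q z * cmod (h z) powr p) \<partial>lborel) + (\<integral>\<^sup>+z. ennreal l * indicator Q z \<partial>lborel)"
          by (rule nn_integral_add) measurable
        also have "\<dots> = ennreal (l powr (1-p)) * I + ennreal l * emeasure lborel Q"
          unfolding I_def using nn_integral_cmult[OF m[folded measurable_lborel2], of "ennreal (l powr (1-p))"]
            nn_integral_cmult_indicator[OF mQ[unfolded sets_lborel[symmetric]], of "ennreal l"] by simp
        finally show ?thesis .
      qed
      finally show ?thesis using R by (simp add: Q_def emeasure_sq)
    qed
    have L1: "ennreal (pi * R^2 * X) \<le> 4 * (\<integral>\<^sup>+z. ennreal (indicator Q z * cmod (h z)) \<partial>lborel)"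
      unfolding X_def Q_def using sq_L1[OF hol R] .
    show ?thesis
    proof (cases "I = \<infinity>")
      case True
      then show ?thesis using A by (simp add: I_def Q_def A_def[symmetric] ennreal_mult_top)
    next
      case False
      then obtain Ir where Ir: "I = ennreal Ir" "0 \<le> Ir" by (cases I) auto
      have "ennreal (pi * R^2 * X) \<le> 4 * (ennreal (l powr (1-p)) * ennreal Ir + ennreal l * ennreal (4 * R^2))"
        using order_trans[OF L1 mult_left_mono[OF J]] Ir by simp
      also have "\<dots> = ennreal (4 * (l powr (1-p) * Ir + l * (4 * R^2)))"
        using l Ir by (simp add: ennreal_plus ennreal_mult mult_ac)
      finally have r: "pi * R^2 * X \<le> 4 * (l powr (1-p) * Ir + l * (4 * R^2))"
        using l Ir by (subst (asm) ennreal_le_iff) (auto intro!: add_nonneg_nonneg mult_nonneg_nonneg)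
      have "16 * l * R^2 = pi * R^2 * X / 2" by (simp add: l_def)
      moreover have "pi * R^2 * X \<le> 4 * l powr (1-p) * Ir + 16 * l * R^2" using r by (simp add: algebra_simps)
      ultimately have r2: "pi * R^2 * X / 2 \<le> 4 * l powr (1-p) * Ir" by linarith
      have lp: "l powr (1-p) = (pi/32) powr (1-p) * X powr (1-p)"
        unfolding l_def using X by (simp add: powr_mult[symmetric])
      have Xp: "X powr p * X powr (1-p) = X" using X by (simp add: powr_add[symmetric])
      have X1: "0 < X powr (1-p)" using X by simp
      have "R^2 * X powr p * X powr (1-p) = R^2 * X" using Xp by (simp add: mult.assoc)
      also have "\<dots> \<le> (8/pi) * l powr (1-p) * Ir" using r2 by (simp add: field_simps)
      also have "\<dots> = A * Ir * X powr (1-p)" by (simp add: lp A_def)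
      finally have "R^2 * X powr p \<le> A * Ir" using X1 by (simp add: mult_le_cancel_right)
      then have le: "ennreal (X powr p * R^2) \<le> ennreal (A * Ir)" by (simp add: mult.commute ennreal_leI)
      have e: "ennreal (A * Ir) = ennreal A * I" using A Ir by (simp add: ennreal_mult)
      show ?thesis using le[unfolded e] by (simp only: X_def I_def Q_def A_def)
    qed
  qed
qed



lemma sq_Lp_small:
  fixes h :: "complex \<Rightarrow> complex"
  assumes p: "0 < p" "p < 1" and hol: "h holomorphic_on sq v R" and R: "0 < R"
  shows "ennreal (cmod (h v) powr p * R^2) \<le> ennreal ((16/pi) * (2 powr (2/p)) powr (1-p)) *
           (\<integral>\<^sup>+z. ennreal (indicator (sq v R) z * cmod (h z) powr p) \<partial>lborel)"
proof -
  define Q where "Q = sq v R"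
  define I where "I = (\<integral>\<^sup>+z. ennreal (indicator Q z * cmod (h z) powr p) \<partial>lborel)"
  define A where "A = (16/pi) * (2 powr (2/p)) powr (1-p)"
  have A: "0 < A" by (simp add: A_def)
  have cont: "continuous_on Q h" unfolding Q_def using hol by (rule holomorphic_on_imp_continuous_on)
  define d where "d = (\<lambda>w. R - max \<bar>Re w - Re v\<bar> \<bar>Im w - Im v\<bar>)"
  define \<psi> where "\<psi> = (\<lambda>w. d w powr (2/p) * cmod (h w))"
  have d0: "0 \<le> d w" if "w \<in> Q" for w using that by (auto simp: d_def Q_def mem_sq)
  have cd: "continuous_on Q d" unfolding d_def by (intro continuous_intros)
  have c\<psi>: "continuous_on Q \<psi>"
    unfolding \<psi>_def using p d0 by (intro continuous_intros continuous_on_powr' cd cont) auto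
  have vQ: "v \<in> Q" using R by (simp add: Q_def mem_sq)
  obtain w0 where w0: "w0 \<in> Q" "\<And>w. w \<in> Q \<Longrightarrow> \<psi> w \<le> \<psi> w0"
    using continuous_attains_sup[OF compact_sq[of v R] _ c\<psi>[unfolded Q_def]] vQ unfolding Q_def by blast
  have \<psi>v: "\<psi> v = R powr (2/p) * cmod (h v)" by (simp add: \<psi>_def d_def)
  show ?thesis
  proof (cases "\<psi> w0 = 0")
    case True
    then have "R powr (2/p) * cmod (h v) \<le> 0" using w0(2)[OF vQ] \<psi>v by simp
    then have "cmod (h v) = 0" using R by (simp add: mult_le_0_iff)
    then show ?thesis by simp
  next
    case False
    define d1 where "d1 = d w0"
    define X where "X = cmod (h w0)"
    have "\<psi> w0 = d1 powr (2/p) * X" by (simp add: \<psi>_def d1_def X_def)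
    with False have d1: "0 < d1" and X: "0 < X"
      using d0[OF w0(1)] by (auto simp: d1_def X_def less_le)
    define \<delta> where "\<delta> = d1 / 2"
    have \<delta>: "0 < \<delta>" using d1 by (simp add: \<delta>_def)
    have md: "max \<bar>Re w0 - Re v\<bar> \<bar>Im w0 - Im v\<bar> = R - d1" by (simp add: d1_def d_def)
    have near: "\<bar>Re z - Re v\<bar> \<le> R - \<delta> \<and> \<bar>Im z - Im v\<bar> \<le> R - \<delta>" if "z \<in> sq w0 \<delta>" for z
    proof -
      have a: "\<bar>Re w0 - Re v\<bar> \<le> R - d1" "\<bar>Im w0 - Im v\<bar> \<le> R - d1" using md by (metis max.cobounded1, metis max.cobounded2)
      have b: "\<bar>Re z - Re v\<bar> \<le> \<bar>Re z - Re w0\<bar> + \<bar>Re w0 - Re v\<bar>" "\<bar>Im z - Im v\<bar> \<le> \<bar>Im z - Im w0\<bar> + \<bar>Im w0 - Im v\<bar>"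
        by linarith+
      show ?thesis using a b that by (simp add: mem_sq \<delta>_def)
    qed
    have sub: "sq w0 \<delta> \<subseteq> Q" using near \<delta> by (fastforce simp: Q_def mem_sq)
    have dz: "\<delta> \<le> d z" if "z \<in> sq w0 \<delta>" for z using near[OF that] by (simp add: d_def max_def)
    define B where "B = 2 powr (2/p) * X"
    have B: "0 < B" using X by (simp add: B_def)
    have bnd: "cmod (h z) \<le> B" if z: "z \<in> sq w0 \<delta>" for z
    proof -
      have "cmod (h z) * \<delta> powr (2/p) \<le> cmod (h z) * d z powr (2/p)"
        using dz[OF z] \<delta> p by (intro mult_left_mono powr_mono2) auto
      also have "\<dots> = \<psi> z" by (simp add: \<psi>_def)
      also have "\<dots> \<le> \<psi> w0" using w0(2) sub z by auto
      also have "\<dots> = (2 * \<delta>) powr (2/p) * X" by (simp add: \<psi>_def d1_def X_def \<delta>_def)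
      also have "\<dots> = B * \<delta> powr (2/p)" using \<delta> by (simp add: B_def powr_mult)
      finally show ?thesis using \<delta> by simp
    qed
    have pw: "cmod (h z) \<le> B powr (1-p) * cmod (h z) powr p" if z: "z \<in> sq w0 \<delta>" for z
    proof (cases "h z = 0")
      case False
      have "cmod (h z) = cmod (h z) powr (1-p) * cmod (h z) powr p"
        using False by (simp add: powr_add[symmetric])
      also have "\<dots> \<le> B powr (1-p) * cmod (h z) powr p"
        using bnd[OF z] p by (intro mult_right_mono powr_mono2) auto
      finally show ?thesis .
    qed simp
    have pwe: "ennreal (indicator (sq w0 \<delta>) z * cmod (h z)) \<le> ennreal (B powr (1-p)) * ennreal (indicator Q z * cmod (h z) powr p)" for z
    proof (cases "z \<in> sq w0 \<delta>")
      case True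
      then have "z \<in> Q" using sub by auto
      then show ?thesis using True pw[OF True] by (simp add: ennreal_mult[symmetric] ennreal_leI)
    qed simp
    have hol0: "h holomorphic_on sq w0 \<delta>" using hol sub by (auto simp: Q_def intro: holomorphic_on_subset)
    have "ennreal (pi * \<delta>^2 * X) \<le> 4 * (\<integral>\<^sup>+z. ennreal (indicator (sq w0 \<delta>) z * cmod (h z)) \<partial>lborel)"
      unfolding X_def by (rule sq_L1[OF hol0 \<delta>])
    also have "\<dots> \<le> 4 * (\<integral>\<^sup>+z. ennreal (B powr (1-p)) * ennreal (indicator Q z * cmod (h z) powr p) \<partial>lborel)"
      by (intro mult_left_mono nn_integral_mono pwe) auto
    also have "\<dots> = 4 * (ennreal (B powr (1-p)) * I)"
    proof -
      have m: "(\<lambda>z. ennreal (indicator Q z * cmod (h z) powr p)) \<in> borel_measurable lborel"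
        using meas_sq_pow[OF cont[unfolded Q_def], of p] p by (simp add: Q_def)
      show ?thesis unfolding I_def using nn_integral_cmult[OF m, of "ennreal (B powr (1-p))"] by simp
    qed
    finally have L: "ennreal (pi * \<delta>^2 * X) \<le> 4 * (ennreal (B powr (1-p)) * I)" .
    show ?thesis
    proof (cases "I = \<infinity>")
      case True
      then show ?thesis using A by (simp add: I_def Q_def A_def[symmetric] ennreal_mult_top)
    next
      case False
      then obtain Ir where Ir: "I = ennreal Ir" "0 \<le> Ir" by (cases I) auto
      have "ennreal (pi * \<delta>^2 * X) \<le> ennreal (4 * (B powr (1-p) * Ir))"
        using L Ir by (simp add: ennreal_mult)
      then have r: "pi * \<delta>^2 * X \<le> 4 * (B powr (1-p) * Ir)"
        using Ir by (subst (asm) ennreal_le_iff) auto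
      have Bp: "B powr (1-p) = (2 powr (2/p)) powr (1-p) * X powr (1-p)"
        unfolding B_def using X by (simp add: powr_mult)
      have Xp: "X powr p * X powr (1-p) = X" using X by (simp add: powr_add[symmetric])
      have X1: "0 < X powr (1-p)" using X by simp
      have "pi * (\<delta>^2 * X powr p) * X powr (1-p) = pi * \<delta>^2 * X" using Xp by (simp add: mult.assoc)
      also have "\<dots> \<le> (4 * (2 powr (2/p)) powr (1-p) * Ir) * X powr (1-p)" using r Bp by (simp add: mult_ac)
      finally have "pi * (\<delta>^2 * X powr p) \<le> 4 * (2 powr (2/p)) powr (1-p) * Ir"
        using X1 by (simp add: mult_le_cancel_right)
      then have k: "4 * (\<delta>^2 * X powr p) \<le> A * Ir" by (simp add: A_def field_simps)
      have "(R powr (2/p) * cmod (h v)) powr p \<le> (\<psi> w0) powr p"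
        using w0(2)[OF vQ] \<psi>v p R by (intro powr_mono2) auto
      moreover have "(R powr (2/p) * cmod (h v)) powr p = R^2 * cmod (h v) powr p"
        using R p by (simp add: powr_mult powr_powr powr_numeral)
      moreover have "(\<psi> w0) powr p = 4 * (\<delta>^2 * X powr p)"
      proof -
        have "\<psi> w0 = (2*\<delta>) powr (2/p) * X" by (simp add: \<psi>_def d1_def X_def \<delta>_def)
        then show ?thesis using \<delta> p X by (simp add: powr_mult powr_powr powr_numeral power_mult_distrib)
      qed
      ultimately have "cmod (h v) powr p * R^2 \<le> A * Ir" using k by (simp add: mult.commute)
      then have le: "ennreal (cmod (h v) powr p * R^2) \<le> ennreal (A * Ir)" by (rule ennreal_leI)
      have e: "ennreal (A * Ir) = ennreal A * I" using A Ir by (simp add: ennreal_mult)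
      show ?thesis using le[unfolded e] by (simp only: I_def Q_def A_def)
    qed
  qed
qed



lemma sq_Lp:
  assumes p: "0 < p"
  obtains A where "A > 0" "\<And>h v R. 0 < R \<Longrightarrow> h holomorphic_on sq v R \<Longrightarrow>
     ennreal (cmod (h v) powr p * R^2) \<le> ennreal A * (\<integral>\<^sup>+z. ennreal (indicator (sq v R) z * cmod (h z) powr p) \<partial>lborel)"
proof (cases "p < 1")
  case True
  show ?thesis
    by (rule that[of "(16/pi) * (2 powr (2/p)) powr (1-p)"]) (use p True sq_Lp_small in auto)
next
  case False
  show ?thesis
    by (rule that[of "(8/pi) * (pi/32) powr (1-p)"]) (use p False sq_Lp_large in auto)
qed

lemma sq_small_in_disc:
  assumes "cmod v \<le> 1/3" "w \<in> sq v (1/4)"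
  shows "cmod w \<le> 5/6"
proof -
  have "cmod (w - v) \<le> \<bar>Re (w - v)\<bar> + \<bar>Im (w - v)\<bar>" by (rule cmod_le)
  also have "\<dots> \<le> 1/2" using assms(2) by (simp add: mem_sq)
  finally have "cmod (w - v) \<le> 1/2" .
  moreover have "cmod w \<le> cmod v + cmod (w - v)" by (metis norm_triangle_sub add.commute)
  ultimately show ?thesis using assms(1) by simp
qed

lemma deriv_bound:
  assumes p: "0 < p"
  obtains C1 where "C1 > 0" "\<And>g v. g holomorphic_on udisc \<Longrightarrow> cmod v \<le> 1/3 \<Longrightarrow>
     ennreal (cmod (deriv g v) powr p) \<le> ennreal C1 * Bp_normp p s g"
proof -
  obtain A where A: "A > 0" and Aineq: "\<And>h v R. 0 < R \<Longrightarrow> h holomorphic_on sq v R \<Longrightarrow>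
     ennreal (cmod (h v) powr p * R^2) \<le> ennreal A * (\<integral>\<^sup>+z. ennreal (indicator (sq v R) z * cmod (h z) powr p) \<partial>lborel)"
    using sq_Lp[OF p] by blast
  define e where "e = p - 2 + s"
  define c where "c = min ((11/36) powr e) 1 / pi"
  have c: "0 < c" by (simp add: c_def)
  have wt: "c \<le> (1 - (cmod w)\<^sup>2) powr e / pi" if "cmod w \<le> 5/6" for w
  proof -
    have x1: "11/36 \<le> 1 - (cmod w)\<^sup>2"
    proof -
      have "(cmod w)\<^sup>2 \<le> (5/6)^2" using that by (intro power_mono) auto
      then show ?thesis by (simp add: power2_eq_square)
    qed
    have x2: "1 - (cmod w)\<^sup>2 \<le> 1" by simp
    have "min ((11/36) powr e) 1 \<le> (1 - (cmod w)\<^sup>2) powr e"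
    proof (cases "0 \<le> e")
      case True
      then have "(11/36) powr e \<le> (1 - (cmod w)\<^sup>2) powr e" using x1 by (intro powr_mono2) auto
      then show ?thesis by simp
    next
      case False
      then have "1 powr e \<le> (1 - (cmod w)\<^sup>2) powr e" using x1 x2 by (intro powr_mono2') auto
      then show ?thesis by simp
    qed
    then show ?thesis by (simp add: c_def divide_right_mono)
  qed
  show ?thesis
  proof (rule that[of "16 * A / c"])
    show "0 < 16 * A / c" using A c by simp
    fix g v assume hol: "g holomorphic_on udisc" and v: "cmod v \<le> 1/3"
    define h where "h = deriv g"
    have holh: "h holomorphic_on udisc" unfolding h_def udisc_def
      using hol by (intro holomorphic_deriv) (auto simp: udisc_def)
    have sub: "sq v (1/4) \<subseteq> udisc"
    proof
      fix w assume "w \<in> sq v (1/4)"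
      then have "cmod w \<le> 5/6" by (rule sq_small_in_disc[OF v])
      then show "w \<in> udisc" by (simp add: udisc_def)
    qed
    have cont: "continuous_on (sq v (1/4)) h" using holh sub
      by (intro holomorphic_on_imp_continuous_on) (auto intro: holomorphic_on_subset)
    define F where "F = (\<lambda>z. ennreal (indicator (sq v (1/4)) z * cmod (h z) powr p))"
    have mF: "F \<in> borel_measurable lborel" using meas_sq_pow[OF cont p] by (simp add: F_def)
    have L: "ennreal (cmod (h v) powr p * (1/4)^2) \<le> ennreal A * integral\<^sup>N lborel F"
      unfolding F_def using Aineq[of "1/4" h v] holh sub by (auto intro: holomorphic_on_subset)
    have pw: "ennreal c * F z \<le> indicator udisc z * ennreal (cmod (h z) powr p * (1 - (cmod z)\<^sup>2) powr (p - 2 + s) / pi)" for z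
    proof (cases "z \<in> sq v (1/4)")
      case True
      then have zD: "z \<in> udisc" using sub by auto
      have "c * cmod (h z) powr p \<le> cmod (h z) powr p * (1 - (cmod z)\<^sup>2) powr e / pi"
      proof -
        have "c * cmod (h z) powr p \<le> ((1 - (cmod z)\<^sup>2) powr e / pi) * cmod (h z) powr p"
          using wt[OF sq_small_in_disc[OF v True]] by (rule mult_right_mono) simp
        then show ?thesis by (simp add: field_simps)
      qed
      then have "ennreal (c * cmod (h z) powr p) \<le> ennreal (cmod (h z) powr p * (1 - (cmod z)\<^sup>2) powr e / pi)"
        by (rule ennreal_leI)
      then show ?thesis using True zD c by (simp add: F_def e_def ennreal_mult[symmetric])
    qed (simp add: F_def)
    have "ennreal c * integral\<^sup>N lborel F = (\<integral>\<^sup>+z. ennreal c * F z \<partial>lborel)"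
      using nn_integral_cmult[OF mF, of "ennreal c"] by simp
    also have "\<dots> \<le> (\<integral>\<^sup>+z. indicator udisc z * ennreal (cmod (h z) powr p * (1 - (cmod z)\<^sup>2) powr (p - 2 + s) / pi) \<partial>lborel)"
      by (intro nn_integral_mono pw)
    also have "\<dots> \<le> Bp_normp p s g" unfolding Bp_normp_def h_def by simp
    finally have B: "ennreal c * integral\<^sup>N lborel F \<le> Bp_normp p s g" .
    show "ennreal (cmod (deriv g v) powr p) \<le> ennreal (16 * A / c) * Bp_normp p s g"
    proof (cases "Bp_normp p s g = \<infinity>")
      case True
      then show ?thesis using A c by (simp add: ennreal_mult_top)
    next
      case False
      then obtain b where b: "Bp_normp p s g = ennreal b" "0 \<le> b" by (cases "Bp_normp p s g") auto
      have Ffin: "integral\<^sup>N lborel F \<noteq> \<infinity>"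
        using B b c by (auto simp: ennreal_mult_top top_unique)
      then obtain f where f: "integral\<^sup>N lborel F = ennreal f" "0 \<le> f" by (cases "integral\<^sup>N lborel F") auto
      have "c * f \<le> b" using B b f c by (simp add: ennreal_mult[symmetric])
      have "cmod (h v) powr p * (1/4)^2 \<le> A * f" using L f A by (simp add: ennreal_mult[symmetric])
      then have "cmod (h v) powr p \<le> 16 * A * f" by (simp add: power2_eq_square field_simps)
      also have "\<dots> \<le> 16 * A * (b / c)" using \<open>c * f \<le> b\<close> c A by (intro mult_left_mono) (auto simp: field_simps)
      finally have "cmod (h v) powr p \<le> 16 * A / c * b" by simp
      then show ?thesis using b A c by (simp add: h_def ennreal_mult[symmetric] ennreal_leI)
    qed
  qed
qed



lemma val_bound:
  assumes p: "0 < p"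
  obtains C2 where "C2 > 0" "\<And>g u. g holomorphic_on udisc \<Longrightarrow> g 0 = 0 \<Longrightarrow> cmod u \<le> 1/3 \<Longrightarrow>
     ennreal (cmod (g u) powr p) \<le> ennreal C2 * Bp_normp p s g"
proof -
  obtain C1 where C1: "C1 > 0" and D: "\<And>g v. g holomorphic_on udisc \<Longrightarrow> cmod v \<le> 1/3 \<Longrightarrow>
     ennreal (cmod (deriv g v) powr p) \<le> ennreal C1 * Bp_normp p s g"
    using deriv_bound[OF p] by blast
  show ?thesis
  proof (rule that[OF C1])
    fix g u assume hol: "g holomorphic_on udisc" and g0: "g 0 = 0" and u: "cmod u \<le> 1/3"
    show "ennreal (cmod (g u) powr p) \<le> ennreal C1 * Bp_normp p s g"
    proof (cases "Bp_normp p s g = \<infinity>")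
      case True
      then show ?thesis using C1 by (simp add: ennreal_mult_top)
    next
      case False
      then obtain b where b: "Bp_normp p s g = ennreal b" "0 \<le> b" by (cases "Bp_normp p s g") auto
      define B where "B = (C1 * b) powr (1/p)"
      have B0: "0 \<le> B" by (simp add: B_def)
      have dB: "cmod (deriv g v) \<le> B" if "v \<in> cball 0 (1/3)" for v
      proof -
        have "ennreal (cmod (deriv g v) powr p) \<le> ennreal (C1 * b)"
          using D[OF hol, of v] that b C1 by (simp add: ennreal_mult)
        then have le: "cmod (deriv g v) powr p \<le> C1 * b" using C1 b by (subst (asm) ennreal_le_iff) auto
        have "cmod (deriv g v) = (cmod (deriv g v) powr p) powr (1/p)" using p by (simp add: powr_powr)
        also have "\<dots> \<le> B" unfolding B_def using le p by (intro powr_mono2) auto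
        finally show ?thesis .
      qed
      have sub: "cball 0 (1/3) \<subseteq> udisc" by (auto simp: udisc_def)
      have "cmod (g u - g 0) \<le> B * cmod (u - 0)"
      proof (rule field_differentiable_bound[of "cball 0 (1/3)"])
        show "convex (cball (0::complex) (1/3))" by simp
        show "(g has_field_derivative deriv g z) (at z within cball 0 (1/3))" if "z \<in> cball 0 (1/3)" for z
          using that sub by (intro holomorphic_derivI[OF hol]) (auto simp: udisc_def)
      qed (use dB u in auto)
      then have "cmod (g u) \<le> B * cmod u" using g0 by simp
      also have "\<dots> \<le> B * 1" using u B0 by (intro mult_left_mono) auto
      finally have "cmod (g u) \<le> B" by simp
      then have "cmod (g u) powr p \<le> B powr p" using p by (intro powr_mono2) auto
      also have "\<dots> = C1 * b" using p C1 b by (simp add: B_def powr_powr)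
      finally show ?thesis using b C1 by (simp add: ennreal_mult[symmetric] ennreal_leI)
    qed
  qed
qed

lemma disc_aut_Moebius: "disc_aut a z = - Moebius_function 0 a z"
  by (simp add: disc_aut_def Moebius_function_def minus_divide_left)

lemma disc_aut_in: "a \<in> udisc \<Longrightarrow> z \<in> udisc \<Longrightarrow> disc_aut a z \<in> udisc"
  using Moebius_function_norm_lt_1[of a z 0] by (simp add: udisc_def disc_aut_Moebius)

lemma disc_aut_holo: "a \<in> udisc \<Longrightarrow> disc_aut a holomorphic_on udisc"
  using Moebius_function_holomorphic[of a 0] unfolding disc_aut_Moebius udisc_def
  by (auto intro: holomorphic_intros)

lemma disc_aut_0: "disc_aut a 0 = a" by (simp add: disc_aut_def)

lemma disc_aut_invol:
  assumes "a \<in> udisc" "z \<in> udisc"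
  shows "disc_aut a (disc_aut a z) = z"
proof -
  have a: "cmod a < 1" and z: "cmod z < 1" using assms by (auto simp: udisc_def)
  have n1: "1 - cnj a * z \<noteq> 0"
  proof
    assume "1 - cnj a * z = 0"
    then have "cmod (cnj a * z) = 1" by (metis eq_iff_diff_eq_0 norm_one)
    moreover have "cmod (cnj a * z) < 1" using mult_strict_mono'[of "cmod a" 1 "cmod z" 1] a z by (simp add: norm_mult)
    ultimately show False by simp
  qed
  have n2: "1 - cnj a * a \<noteq> 0"
  proof
    assume "1 - cnj a * a = 0"
    then have "cmod (cnj a * a) = 1" by (metis eq_iff_diff_eq_0 norm_one)
    moreover have "cmod (cnj a * a) < 1" using mult_strict_mono'[of "cmod a" 1 "cmod a" 1] a by (simp add: norm_mult)
    ultimately show False by simp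
  qed
  have "1 - cnj a * ((a - z) / (1 - cnj a * z)) = (1 - cnj a * a) / (1 - cnj a * z)"
    using n1 by (simp add: field_simps)
  moreover have "a - (a - z) / (1 - cnj a * z) = z * (1 - cnj a * a) / (1 - cnj a * z)"
    using n1 by (simp add: field_simps)
  ultimately show ?thesis using n1 n2 by (simp add: disc_aut_def)
qed

lemma disc_aut_small:
  assumes a: "a \<in> udisc" and w: "cmod (w - a) \<le> (1 - cmod a) / 4"
  shows "cmod (disc_aut a w) \<le> 1/3" and "w \<in> udisc"
proof -
  have a1: "cmod a < 1" using a by (simp add: udisc_def)
  have wa: "cmod w \<le> cmod a + cmod (w - a)" by (metis norm_triangle_sub add.commute)
  then show "w \<in> udisc" using w a1 by (simp add: udisc_def)
  have "cmod (1 - cnj a * w) \<ge> 1 - cmod (cnj a * w)"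
    by (metis norm_one norm_triangle_ineq2)
  moreover have "cmod (cnj a * w) \<le> cmod w" using a1 by (simp add: norm_mult mult_left_le_one_le)
  ultimately have d: "cmod (1 - cnj a * w) \<ge> 3 * ((1 - cmod a) / 4)" using wa w by argo
  have pos: "0 < (1 - cmod a) / 4" using a1 by simp
  have "cmod (disc_aut a w) = cmod (a - w) / cmod (1 - cnj a * w)" by (simp add: disc_aut_def norm_divide)
  also have "\<dots> \<le> ((1 - cmod a) / 4) / (3 * ((1 - cmod a) / 4))"
    using w d pos by (intro frac_le) (auto simp: norm_minus_commute)
  also have "\<dots> = 1/3" using pos by simp
  finally show "cmod (disc_aut a w) \<le> 1/3" .
qed



lemma standing_KD:
  assumes "standing_K K"
  shows "\<And>x. 0 \<le> x \<Longrightarrow> 0 \<le> K x" "\<And>x y. 0 \<le> x \<Longrightarrow> x \<le> y \<Longrightarrow> K x \<le> K y" "\<And>t. 0 < t \<Longrightarrow> 0 < K t"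
  using assms unfolding standing_K_def by (auto intro: mono_onD)

lemma phiK_ge: "0 < t \<Longrightarrow> t \<le> 1 \<Longrightarrow> ennreal (K (t*x) / K t) \<le> phiK K x"
  unfolding phiK_def by (rule SUP_upper) auto

lemma phiK_mono:
  assumes K: "standing_K K" and xy: "0 \<le> x" "x \<le> y"
  shows "phiK K x \<le> phiK K y"
  unfolding phiK_def
proof (rule SUP_mono)
  fix t assume t: "t \<in> {0<..(1::real)}"
  have "K (t*x) \<le> K (t*y)" using standing_KD(2)[OF K] t xy by (auto intro: mult_left_mono)
  then have "K (t*x) / K t \<le> K (t*y) / K t" using standing_KD(3)[OF K, of t] t by (intro divide_right_mono) auto
  then show "\<exists>m\<in>{0<..1}. ennreal (K (t * x) / K t) \<le> ennreal (K (m * y) / K m)"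
    using t by (intro bexI[of _ t] ennreal_leI) auto
qed

lemma phiK_bound:
  assumes K: "standing_K K" and B: "condB K \<sigma>" and s: "0 < \<sigma>"
  obtains C3 where "C3 > 0" "\<And>x. 1 \<le> x \<Longrightarrow> phiK K x \<le> ennreal (C3 * x powr \<sigma>)"
proof -
  define I where "I = (\<integral>\<^sup>+ x. indicator {1<..} x * phiK K x / ennreal (x powr (1 + \<sigma>)) \<partial>lborel)"
  have "I < \<infinity>" using B by (simp add: condB_def I_def)
  then obtain Ir where Ir: "I = ennreal Ir" "0 \<le> Ir" by (cases I) auto
  show ?thesis
  proof (rule that[of "(Ir + 1) * 2 powr (1 + \<sigma>)"])
    show "0 < (Ir + 1) * 2 powr (1 + \<sigma>)" using Ir by (simp add: add_pos_nonneg)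
    fix x :: real assume x: "1 \<le> x"
    define X where "X = (2*x) powr (1+\<sigma>)"
    have X: "0 < X" using x by (simp add: X_def)
    define c where "c = phiK K x * ennreal (1/X)"
    have pw: "c * indicator {x<..2*x} y \<le> indicator {1<..} y * phiK K y / ennreal (y powr (1 + \<sigma>))" for y
    proof (cases "y \<in> {x<..2*x}")
      case True
      then have y: "x < y" "y \<le> 2*x" "1 < y" using x by auto
      have "phiK K x \<le> phiK K y" using y x by (intro phiK_mono[OF K]) auto
      moreover have "ennreal (1/X) \<le> ennreal (1 / y powr (1 + \<sigma>))"
        unfolding X_def using y s x by (intro ennreal_leI divide_left_mono powr_mono2 mult_pos_pos) auto
      ultimately have "c \<le> phiK K y * ennreal (1 / y powr (1 + \<sigma>))"
        unfolding c_def by (intro mult_mono) auto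
      also have "\<dots> = phiK K y / ennreal (y powr (1 + \<sigma>))"
        using y by (simp add: divide_ennreal_def inverse_ennreal divide_inverse)
      finally show ?thesis using True y by simp
    qed simp
    have "c * ennreal x = (\<integral>\<^sup>+y. c * indicator {x<..2*x} y \<partial>lborel)"
      using x by (subst nn_integral_cmult_indicator) auto
    also have "\<dots> \<le> I" unfolding I_def by (intro nn_integral_mono pw)
    finally have ci: "c * ennreal x \<le> ennreal Ir" using Ir by simp
    have "phiK K x = c * ennreal x * ennreal (X / x)"
    proof -
      have "ennreal (1/X) * ennreal x * ennreal (X / x) = 1"
        using X x by (simp add: ennreal_mult[symmetric])
      then show ?thesis unfolding c_def by (simp add: mult.assoc)
    qed
    also have "\<dots> \<le> ennreal Ir * ennreal (X / x)" by (intro mult_right_mono ci) auto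
    also have "\<dots> = ennreal (Ir * (X / x))" by (rule ennreal_mult[symmetric]) (use Ir X x in auto)
    also have "X / x = 2 powr (1+\<sigma>) * x powr \<sigma>"
      using x by (simp add: X_def powr_mult powr_add)
    also have "ennreal (Ir * (2 powr (1+\<sigma>) * x powr \<sigma>)) \<le> ennreal ((Ir + 1) * 2 powr (1 + \<sigma>) * x powr \<sigma>)"
      using Ir by (intro ennreal_leI) (auto intro!: mult_right_mono simp: mult.assoc)
    finally show "phiK K x \<le> ennreal ((Ir + 1) * 2 powr (1 + \<sigma>) * x powr \<sigma>)" .
  qed
qed

lemma K_ratio:
  assumes K: "standing_K K" and C3: "\<And>x. 1 \<le> x \<Longrightarrow> phiK K x \<le> ennreal (C3 * x powr \<sigma>)"
    and C3pos: "0 < C3" and tu: "0 < t" "t \<le> u" "u \<le> 1"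
  shows "K u \<le> C3 * (u/t) powr \<sigma> * K t"
proof -
  have Kt: "0 < K t" using standing_KD(3)[OF K] tu by auto
  have "ennreal (K (t * (u/t)) / K t) \<le> phiK K (u/t)" using tu by (intro phiK_ge) auto
  also have "\<dots> \<le> ennreal (C3 * (u/t) powr \<sigma>)" using tu by (intro C3) auto
  finally have "ennreal (K u / K t) \<le> ennreal (C3 * (u/t) powr \<sigma>)" using tu by simp
  then have "K u / K t \<le> C3 * (u/t) powr \<sigma>"
    using C3pos by (subst (asm) ennreal_le_iff) auto
  then show ?thesis using Kt by (simp add: divide_le_eq)
qed



lemma local_osc:
  assumes p: "0 < p" and Kpos: "\<And>t. 0 < t \<Longrightarrow> 0 < K t"
  obtains C2 where "C2 > 0" "\<And>f a w. f holomorphic_on udisc \<Longrightarrow> BpK_normp K p s f < \<infinity> \<Longrightarrow> a \<in> udisc \<Longrightarrow>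
     cmod (w - a) \<le> (1 - cmod a)/4 \<Longrightarrow>
     cmod (f w - f a) powr p \<le> C2 * (K (1 - (cmod a)\<^sup>2) / (1 - (cmod a)\<^sup>2) powr s) * enn2real (BpK_normp K p s f)"
proof -
  obtain C2 where C2: "C2 > 0" and V: "\<And>g u. g holomorphic_on udisc \<Longrightarrow> g 0 = 0 \<Longrightarrow> cmod u \<le> 1/3 \<Longrightarrow>
     ennreal (cmod (g u) powr p) \<le> ennreal C2 * Bp_normp p s g"
    using val_bound[OF p, where s=s] by blast
  show ?thesis
  proof (rule that[OF C2])
    fix f a w
    assume hol: "f holomorphic_on udisc" and fin: "BpK_normp K p s f < \<infinity>" and a: "a \<in> udisc"
      and w: "cmod (w - a) \<le> (1 - cmod a)/4"
    define \<rho> where "\<rho> = 1 - (cmod a)\<^sup>2"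
    have a1: "cmod a < 1" using a by (simp add: udisc_def)
    have \<rho>: "0 < \<rho>"
    proof -
      have "(cmod a)\<^sup>2 < 1^2" using a1 by (intro power_strict_mono) auto
      then show ?thesis by (simp add: \<rho>_def)
    qed
    have K\<rho>: "0 < K \<rho>" using Kpos \<rho> by auto
    define g where "g = (\<lambda>z. f (disc_aut a z) - f a)"
    have holg: "g holomorphic_on udisc"
    proof -
      have "(f \<circ> disc_aut a) holomorphic_on udisc"
        using disc_aut_holo[OF a] hol disc_aut_in[OF a] by (intro holomorphic_on_compose_gen) auto
      then show ?thesis unfolding g_def o_def by (intro holomorphic_intros)
    qed
    have g0: "g 0 = 0" by (simp add: g_def disc_aut_0)
    define u where "u = disc_aut a w"
    have u: "cmod u \<le> 1/3" and wD: "w \<in> udisc" using disc_aut_small[OF a w] by (auto simp: u_def)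
    have gu: "g u = f w - f a" using disc_aut_invol[OF a wD] by (simp add: g_def u_def)
    have E: "ennreal (cmod (g u) powr p) \<le> ennreal C2 * Bp_normp p s g" by (rule V[OF holg g0 u])
    define wt where "wt = \<rho> powr s / K \<rho>"
    have wt: "0 < wt" using \<rho> K\<rho> by (simp add: wt_def)
    have W: "ennreal wt * Bp_normp p s g \<le> BpK_normp K p s f"
    proof -
      have "ennreal wt * Bp_normp p s g \<le> (SUP a\<in>udisc. ennreal ((1 - (cmod a)\<^sup>2) powr s / K (1 - (cmod a)\<^sup>2)) *
        Bp_normp p s (\<lambda>z. f (disc_aut a z) - f a))"
        using a unfolding wt_def \<rho>_def g_def by (rule SUP_upper)
      also have "\<dots> \<le> BpK_normp K p s f" unfolding BpK_normp_def by (rule add_increasing) auto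
      finally show ?thesis .
    qed
    define N where "N = enn2real (BpK_normp K p s f)"
    have N: "BpK_normp K p s f = ennreal N" "0 \<le> N" using fin by (auto simp: N_def)
    have "Bp_normp p s g \<noteq> \<infinity>" using W N wt by (auto simp: ennreal_mult_top top_unique)
    then obtain b where b: "Bp_normp p s g = ennreal b" "0 \<le> b" by (cases "Bp_normp p s g") auto
    have "wt * b \<le> N" using W b N wt by (simp add: ennreal_mult[symmetric])
    then have bN: "b \<le> (K \<rho> / \<rho> powr s) * N" using wt \<rho> K\<rho> by (simp add: wt_def field_simps)
    have "cmod (g u) powr p \<le> C2 * b" using E b C2 by (simp add: ennreal_mult[symmetric])
    also have "\<dots> \<le> C2 * ((K \<rho> / \<rho> powr s) * N)" using bN C2 by (intro mult_left_mono) auto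
    finally show "cmod (f w - f a) powr p \<le> C2 * (K (1 - (cmod a)\<^sup>2) / (1 - (cmod a)\<^sup>2) powr s) * enn2real (BpK_normp K p s f)"
      using gu by (simp add: \<rho>_def N_def mult.assoc)
  qed
qed



lemma deriv_n_bound:
  assumes p: "0 < p" and n: "0 < n" and C2: "0 < C2"
    and osc: "\<And>f a w. f holomorphic_on udisc \<Longrightarrow> BpK_normp K p s f < \<infinity> \<Longrightarrow> a \<in> udisc \<Longrightarrow>
     cmod (w - a) \<le> (1 - cmod a)/4 \<Longrightarrow>
     cmod (f w - f a) powr p \<le> C2 * (K (1 - (cmod a)\<^sup>2) / (1 - (cmod a)\<^sup>2) powr s) * enn2real (BpK_normp K p s f)"
    and Kpos: "\<And>t. 0 < t \<Longrightarrow> 0 < K t"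
    and hol: "f holomorphic_on udisc" and fin: "BpK_normp K p s f < \<infinity>" and a: "a \<in> udisc"
  shows "cmod ((deriv ^^ n) f a) \<le> (fact n * 8^n * C2 powr (1/p)) * enn2real (BpK_normp K p s f) powr (1/p)
           * (K (1 - (cmod a)\<^sup>2) / (1 - (cmod a)\<^sup>2) powr (p * real n + s)) powr (1/p)"
proof -
  define \<rho> where "\<rho> = 1 - (cmod a)\<^sup>2"
  define N where "N = enn2real (BpK_normp K p s f)"
  have N0: "0 \<le> N" by (simp add: N_def)
  have a1: "cmod a < 1" using a by (simp add: udisc_def)
  have \<rho>: "0 < \<rho>"
  proof -
    have "(cmod a)\<^sup>2 < 1^2" using a1 by (intro power_strict_mono) auto
    then show ?thesis by (simp add: \<rho>_def)
  qed
  have K\<rho>: "0 < K \<rho>" using Kpos \<rho> by auto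
  define W where "W = K \<rho> / \<rho> powr s"
  have W0: "0 \<le> W" using K\<rho> by (simp add: W_def)
  define r where "r = (1 - cmod a) / 4"
  have r: "0 < r" using a1 by (simp add: r_def)
  define M where "M = (C2 * W * N) powr (1/p)"
  have M0: "0 \<le> M" by (simp add: M_def)
  have oscM: "cmod (f w - f a) \<le> M" if "cmod (w - a) \<le> r" for w
  proof -
    have le: "cmod (f w - f a) powr p \<le> C2 * W * N"
      using osc[OF hol fin a, of w] that by (simp add: r_def W_def \<rho>_def N_def)
    have "cmod (f w - f a) = (cmod (f w - f a) powr p) powr (1/p)" using p by (simp add: powr_powr)
    also have "\<dots> \<le> M" unfolding M_def using le p by (intro powr_mono2) auto
    finally show ?thesis .
  qed
  have cb: "cball a r \<subseteq> udisc"
  proof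
    fix w assume "w \<in> cball a r"
    then have "cmod (w - a) \<le> (1 - cmod a)/4" by (simp add: r_def dist_norm norm_minus_commute)
    then show "w \<in> udisc" using disc_aut_small[OF a] by blast
  qed
  have cont: "continuous_on (cball a r) f"
    using hol cb by (intro holomorphic_on_imp_continuous_on) (auto intro: holomorphic_on_subset)
  define D where "D = fact n / r^n"
  have D: "0 < D" using r by (simp add: D_def)
  have eps: "cmod ((deriv ^^ n) f a) \<le> D * M + e" if e: "0 < e" for e
  proof -
    have "cmod ((deriv ^^ n) f a) \<le> fact n * (M + e/D) / r^n"
    proof (rule Cauchy_higher_deriv_bound)
      show "f holomorphic_on ball a r" by (rule holomorphic_on_subset[OF hol]) (use cb ball_subset_cball in blast)
      show "continuous_on (cball a r) f" by (rule cont)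
      show "f w \<in> ball (f a) (M + e/D)" if "w \<in> ball a r" for w
      proof -
        have "cmod (w - a) \<le> r" using that by (simp add: dist_norm norm_minus_commute)
        then have "cmod (f w - f a) \<le> M" by (rule oscM)
        moreover have "0 < e / D" using e D by simp
        ultimately show ?thesis by (simp add: dist_norm norm_minus_commute)
      qed
    qed (use r n in auto)
    also have "\<dots> = D * M + e" using D r by (simp add: D_def field_simps)
    finally show ?thesis .
  qed
  have step1: "cmod ((deriv ^^ n) f a) \<le> D * M" by (rule field_le_epsilon) (rule eps)
  have rr: "\<rho> / 8 \<le> r"
  proof -
    have "\<rho> = (1 - cmod a) * (1 + cmod a)" by (simp add: \<rho>_def power2_eq_square algebra_simps)
    also have "\<dots> \<le> (1 - cmod a) * 2" using a1 by (intro mult_left_mono) auto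
    finally show ?thesis by (simp add: r_def)
  qed
  have "D * M \<le> fact n * 8^n / \<rho>^n * M"
  proof -
    have "(\<rho>/8)^n \<le> r^n" using rr \<rho> by (intro power_mono) auto
    then have "fact n / r^n \<le> fact n / (\<rho>/8)^n" using \<rho> r by (intro divide_left_mono) auto
    also have "\<dots> = fact n * 8^n / \<rho>^n" by (simp add: power_divide)
    finally show ?thesis unfolding D_def using M0 by (intro mult_right_mono) auto
  qed
  also have "\<dots> = (fact n * 8^n * C2 powr (1/p)) * N powr (1/p) * (W powr (1/p) / \<rho>^n)"
    using C2 N0 W0 by (simp add: M_def powr_mult)
  also have "W powr (1/p) / \<rho>^n = (K \<rho> / \<rho> powr (p * real n + s)) powr (1/p)"
  proof -
    have "\<rho> powr (p * real n + s) = \<rho> powr (p * real n) * \<rho> powr s" by (simp add: powr_add)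
    then have "K \<rho> / \<rho> powr (p * real n + s) = W / \<rho> powr (p * real n)" by (simp add: W_def field_simps)
    moreover have "(\<rho> powr (p * real n)) powr (1/p) = \<rho>^n" using p \<rho> by (simp add: powr_powr powr_realpow)
    ultimately show ?thesis using W0 \<rho> by (simp add: powr_divide)
  qed
  finally show ?thesis using step1 by (simp add: N_def \<rho>_def)
qed



lemma W_ratio:
  fixes \<rho> \<rho>' Cc \<sigma> s :: real and K :: "real \<Rightarrow> real"
  assumes Kr: "\<And>t u. 0 < t \<Longrightarrow> t \<le> u \<Longrightarrow> u \<le> 1 \<Longrightarrow> K u \<le> Cc * (u/t) powr \<sigma> * K t"
    and r: "0 < \<rho>" "\<rho> \<le> \<rho>'" "\<rho>' \<le> 1"
  shows "K \<rho>' / \<rho>' powr s \<le> Cc * (\<rho>/\<rho>') powr (s-\<sigma>) * (K \<rho> / \<rho> powr s)"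
proof -
  have r': "0 < \<rho>'" using r(1) r(2) by (rule less_le_trans)
  have "K \<rho>' / \<rho>' powr s \<le> Cc * (\<rho>'/\<rho>) powr \<sigma> * K \<rho> / \<rho>' powr s"
    using Kr[OF r] r' by (intro divide_right_mono) auto
  also have "\<dots> = Cc * (\<rho>/\<rho>') powr (s-\<sigma>) * (K \<rho> / \<rho> powr s)"
  proof -
    have e1: "\<rho>' powr s = \<rho>' powr \<sigma> * \<rho>' powr (s-\<sigma>)" by (simp add: powr_add[symmetric])
    have e2: "\<rho> powr s = \<rho> powr \<sigma> * \<rho> powr (s-\<sigma>)" by (simp add: powr_add[symmetric])
    show ?thesis using r r' unfolding e1 e2 by (simp add: powr_divide field_simps)
  qed
  finally show ?thesis .
qed

lemma geo_rev_bound: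
  fixes \<theta> :: real
  assumes "0 \<le> \<theta>" "\<theta> < 1"
  shows "(\<Sum>k\<le>m. \<theta>^(m-k)) \<le> 1 / (1 - \<theta>)"
proof -
  have "(\<Sum>k\<le>m. \<theta>^(m-k)) = (\<Sum>k=0..m. \<theta>^(m-k))" by (simp add: atLeast0AtMost)
  also have "\<dots> = (\<Sum>k=0..m. \<theta>^(m + 0 - (m + 0 - k)))"
    by (subst sum.atLeastAtMost_rev) simp
  also have "\<dots> = (\<Sum>k<Suc m. \<theta>^k)" by (intro sum.cong) auto
  also have "\<dots> = (1 - \<theta>^Suc m) / (1 - \<theta>)" using assms by (simp only: sum_gp_strict) simp
  also have "\<dots> \<le> 1 / (1 - \<theta>)" using assms by (intro divide_right_mono) auto
  finally show ?thesis .
qed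



lemma zero_bound:
  fixes f :: "complex \<Rightarrow> complex" and K :: "real \<Rightarrow> real" and p s \<sigma> C2 C3 :: real
  assumes p: "0 < p" and s\<sigma>: "0 < \<sigma>" "\<sigma> < s" and C2: "0 < C2" and C3: "0 < C3"
    and osc: "\<And>f a w. f holomorphic_on udisc \<Longrightarrow> BpK_normp K p s f < \<infinity> \<Longrightarrow> a \<in> udisc \<Longrightarrow>
     cmod (w - a) \<le> (1 - cmod a)/4 \<Longrightarrow>
     cmod (f w - f a) powr p \<le> C2 * (K (1 - (cmod a)\<^sup>2) / (1 - (cmod a)\<^sup>2) powr s) * enn2real (BpK_normp K p s f)"
    and Kpos: "\<And>t. 0 < t \<Longrightarrow> 0 < K t"
    and Kr: "\<And>t u. 0 < t \<Longrightarrow> t \<le> u \<Longrightarrow> u \<le> 1 \<Longrightarrow> K u \<le> C3 * (u/t) powr \<sigma> * K t"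
    and hol: "f holomorphic_on udisc" and fin: "BpK_normp K p s f < \<infinity>" and a: "a \<in> udisc"
  shows "cmod (f a) \<le> ((C3 / K 1) powr (1/p) + (C2*C3) powr (1/p) * 2 powr ((s-\<sigma>)/p) / (1 - (3/4) powr ((s-\<sigma>)/p)))
      * enn2real (BpK_normp K p s f) powr (1/p) * (K (1 - (cmod a)\<^sup>2) / (1 - (cmod a)\<^sup>2) powr s) powr (1/p)"
proof -
  define N where "N = enn2real (BpK_normp K p s f)"
  have N0: "0 \<le> N" by (simp add: N_def)
  have NB: "BpK_normp K p s f = ennreal N" using fin by (simp add: N_def)
  define \<rho> where "\<rho> = 1 - (cmod a)\<^sup>2"
  have a1: "cmod a < 1" using a by (simp add: udisc_def)
  have \<rho>: "0 < \<rho>"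
  proof -
    have "(cmod a)\<^sup>2 < 1^2" using a1 by (intro power_strict_mono) auto
    then show ?thesis by (simp add: \<rho>_def)
  qed
  have \<rho>1: "\<rho> \<le> 1" by (simp add: \<rho>_def)
  define Wf where "Wf = (\<lambda>r. K r / r powr s)"
  define W where "W = Wf \<rho>"
  have W0: "0 \<le> W" using Kpos[OF \<rho>] by (simp add: W_def Wf_def)
  have Wf0: "0 \<le> Wf r" if "0 < r" for r using Kpos[OF that] by (simp add: Wf_def)
  define T where "T = (\<lambda>k::nat. 1 - (3/4::real)^k)"
  define A where "A = (\<lambda>k. (C2 * Wf (1 - (T k)\<^sup>2) * N) powr (1/p))"
  define E where "E = (s - \<sigma>) / p"
  have E: "0 < E" using s\<sigma> p by (simp add: E_def)
  define \<theta> where "\<theta> = (3/4::real) powr E"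
  have \<theta>: "0 \<le> \<theta>" "\<theta> < 1"
  proof -
    show "0 \<le> \<theta>" by (simp add: \<theta>_def)
    have "(3/4::real) powr E < 1 powr E" using E by (intro powr_less_mono2) auto
    then show "\<theta> < 1" by (simp add: \<theta>_def)
  qed
  have T0: "T 0 = 0" by (simp add: T_def)
  have Tnn: "0 \<le> T k" for k
  proof -
    have "(3/4::real)^k \<le> 1" by (intro power_le_one) auto
    then show ?thesis by (simp add: T_def)
  qed
  have Tlt: "T k < 1" for k by (simp add: T_def)
  have TS: "T (Suc k) - T k = (1 - T k) / 4" for k by (simp add: T_def)
  have Tmono: "T k \<le> T m" if "k \<le> m" for k m
  proof -
    have "(3/4::real)^m \<le> (3/4)^k" using that by (intro power_decreasing) auto
    then show ?thesis by (simp add: T_def)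
  qed
  have step: "cmod (f (of_real t * e) - f (of_real (T k) * e)) \<le> A k"
    if e: "cmod e = 1" and t: "T k \<le> t" "t \<le> T (Suc k)" for t k e
  proof -
    define b where "b = of_real (T k) * e"
    have nb: "cmod b = T k" using e Tnn[of k] by (simp add: b_def norm_mult)
    have bD: "b \<in> udisc" using nb Tlt[of k] by (simp add: udisc_def)
    have "of_real t * e - b = of_real (t - T k) * e" by (simp add: b_def algebra_simps)
    then have "cmod (of_real t * e - b) = t - T k" using e t by (simp add: norm_mult del: of_real_diff)
    also have "\<dots> \<le> (1 - cmod b) / 4" using t TS[of k] nb by simp
    finally have le: "cmod (f (of_real t * e) - f b) powr p \<le> C2 * Wf (1 - (T k)\<^sup>2) * N"
      using osc[OF hol fin bD] nb by (simp add: Wf_def N_def)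
    have "cmod (f (of_real t * e) - f b) = (cmod (f (of_real t * e) - f b) powr p) powr (1/p)"
      using p by (simp add: powr_powr)
    also have "\<dots> \<le> A k" unfolding A_def using le p by (intro powr_mono2) auto
    finally show ?thesis by (simp add: b_def)
  qed
  have A0: "0 \<le> A k" for k by (simp add: A_def)
  have chain: "\<forall>t. 0 \<le> t \<longrightarrow> t \<le> T (Suc m) \<longrightarrow> cmod (f (of_real t * e) - f 0) \<le> (\<Sum>k\<le>m. A k)"
    if e: "cmod e = 1" for m e
  proof (induction m)
    case 0
    show ?case using step[OF e, of 0] T0 by simp
  next
    case (Suc m)
    show ?case
    proof (intro allI impI)
      fix t assume t0: "0 \<le> t" and t: "t \<le> T (Suc (Suc m))"
      show "cmod (f (of_real t * e) - f 0) \<le> (\<Sum>k\<le>Suc m. A k)"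
      proof (cases "t \<le> T (Suc m)")
        case True
        then have "cmod (f (of_real t * e) - f 0) \<le> (\<Sum>k\<le>m. A k)" using Suc t0 by blast
        also have "\<dots> \<le> (\<Sum>k\<le>Suc m. A k)" using A0[of "Suc m"] by simp
        finally show ?thesis .
      next
        case False
        have s1: "cmod (f (of_real t * e) - f (of_real (T (Suc m)) * e)) \<le> A (Suc m)"
          using step[OF e, of "Suc m" t] False t by simp
        have s2: "cmod (f (of_real (T (Suc m)) * e) - f 0) \<le> (\<Sum>k\<le>m. A k)"
          using Suc Tnn[of "Suc m"] by blast
        have "cmod (f (of_real t * e) - f 0) \<le> cmod (f (of_real t * e) - f (of_real (T (Suc m)) * e))
              + cmod (f (of_real (T (Suc m)) * e) - f 0)"
          using norm_triangle_ineq[of "f (of_real t * e) - f (of_real (T (Suc m)) * e)" "f (of_real (T (Suc m)) * e) - f 0"]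
          by simp
        also have "\<dots> \<le> A (Suc m) + (\<Sum>k\<le>m. A k)" using s1 s2 by simp
        finally show ?thesis by (simp add: add.commute)
      qed
    qed
  qed
  have f0: "cmod (f 0) \<le> N powr (1/p)"
  proof -
    have "ennreal (cmod (f 0) powr p) \<le> BpK_normp K p s f"
      unfolding BpK_normp_def by (rule add_increasing2) auto
    then have "cmod (f 0) powr p \<le> N" using NB N0 by simp
    then have "(cmod (f 0) powr p) powr (1/p) \<le> N powr (1/p)" using p by (intro powr_mono2) auto
    then show ?thesis using p by (simp add: powr_powr)
  qed
  have WK: "K 1 / C3 \<le> W"
  proof -
    have "K 1 / 1 powr s \<le> C3 * (\<rho>/1) powr (s-\<sigma>) * (K \<rho> / \<rho> powr s)"
      using W_ratio[where Cc=C3 and \<sigma>=\<sigma> and K=K and \<rho>=\<rho> and \<rho>'=1 and s=s] Kr \<rho> \<rho>1 by auto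
    also have "\<dots> \<le> C3 * 1 * W"
    proof -
      have pw1: "\<rho> powr (s-\<sigma>) \<le> 1" by (rule powr_le1) (use \<rho> \<rho>1 s\<sigma> in auto)
      have "C3 * \<rho> powr (s-\<sigma>) * W \<le> C3 * 1 * W"
        using C3 W0 pw1 by (intro mult_right_mono mult_left_mono) auto
      then show ?thesis by (simp add: W_def Wf_def)
    qed
    finally show ?thesis using C3 by (simp add: field_simps)
  qed
  have part0: "N powr (1/p) \<le> (C3 / K 1) powr (1/p) * N powr (1/p) * W powr (1/p)"
  proof -
    have K1: "0 < K 1" using Kpos by simp
    have "1 \<le> C3 / K 1 * W" using WK K1 C3 by (simp add: field_simps)
    then have "1 \<le> (C3 / K 1 * W) powr (1/p)" using p by (intro ge_one_powr_ge_zero) auto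
    then have "1 * N powr (1/p) \<le> (C3 / K 1 * W) powr (1/p) * N powr (1/p)" by (intro mult_right_mono) auto
    moreover have "(C3 / K 1 * W) powr (1/p) = (C3 / K 1) powr (1/p) * W powr (1/p)"
      using C3 K1 W0 by (simp add: powr_mult powr_divide)
    ultimately show ?thesis by (simp add: mult_ac)
  qed
  define Z where "Z = (C2 * C3 * W * N) powr (1/p)"
  have osc0: "cmod (f a - f 0) \<le> Z * 2 powr E / (1 - \<theta>)"
  proof (cases "a = 0")
    case True
    then show ?thesis using \<theta> by (simp add: Z_def)
  next
    case False
    define e where "e = a / of_real (cmod a)"
    have e: "cmod e = 1" using False by (simp add: e_def norm_divide)
    have ae: "of_real (cmod a) * e = a" using False by (simp add: e_def)
    have ex: "\<exists>k. cmod a \<le> T (Suc k)"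
    proof -
      obtain n where n: "(3/4::real)^n < 1 - cmod a" using real_arch_pow_inv[of "1 - cmod a" "3/4"] a1 by auto
      have p0: "0 \<le> (3/4::real)^n" by simp
      have "cmod a \<le> T (Suc n)" using n p0 unfolding T_def power_Suc by linarith
      then show ?thesis by blast
    qed
    define m where "m = (LEAST k. cmod a \<le> T (Suc k))"
    have m1: "cmod a \<le> T (Suc m)" unfolding m_def using ex by (rule LeastI_ex)
    have m2: "T m \<le> cmod a"
    proof (cases m)
      case 0
      then show ?thesis using T0 by simp
    next
      case (Suc j)
      then have "j < m" by simp
      then have "\<not> cmod a \<le> T (Suc j)" unfolding m_def by (rule not_less_Least)
      then show ?thesis using Suc by simp
    qed
    have "cmod (f (of_real (cmod a) * e) - f 0) \<le> (\<Sum>k\<le>m. A k)"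
      using chain[OF e, of m] m1 norm_ge_zero[of a] by blast
    then have "cmod (f a - f 0) \<le> (\<Sum>k\<le>m. A k)" by (simp only: ae)
    also have "\<dots> \<le> (\<Sum>k\<le>m. Z * 2 powr E * \<theta>^(m-k))"
    proof (intro sum_mono)
      fix k assume "k \<in> {..m}"
      then have km: "k \<le> m" by simp
      define \<rho>k where "\<rho>k = 1 - (T k)\<^sup>2"
      have Tka: "T k \<le> cmod a" using Tmono[OF km] m2 by simp
      have \<rho>\<rho>k: "\<rho> \<le> \<rho>k"
      proof -
        have "(T k)\<^sup>2 \<le> (cmod a)\<^sup>2" using Tka Tnn[of k] by (intro power_mono) auto
        then show ?thesis by (simp add: \<rho>_def \<rho>k_def)
      qed
      have \<rho>k1: "\<rho>k \<le> 1" by (simp add: \<rho>k_def)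
      have \<rho>kpos: "0 < \<rho>k" using \<rho> \<rho>\<rho>k by linarith
      have Wk: "Wf \<rho>k \<le> C3 * (\<rho>/\<rho>k) powr (s-\<sigma>) * W"
        unfolding Wf_def W_def using W_ratio[where Cc=C3 and \<sigma>=\<sigma> and K=K and \<rho>=\<rho> and \<rho>'=\<rho>k and s=s] Kr \<rho> \<rho>\<rho>k \<rho>k1 by auto
      have "A k = (C2 * Wf \<rho>k * N) powr (1/p)" by (simp add: A_def \<rho>k_def)
      also have "\<dots> \<le> (C2 * (C3 * (\<rho>/\<rho>k) powr (s-\<sigma>) * W) * N) powr (1/p)"
        using Wk C2 N0 p Wf0[OF \<rho>kpos] by (intro powr_mono2 mult_right_mono mult_left_mono) auto
      also have "\<dots> = Z * ((\<rho>/\<rho>k) powr (s-\<sigma>)) powr (1/p)"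
        using C2 C3 W0 N0 by (simp add: Z_def powr_mult[symmetric] mult_ac)
      also have "((\<rho>/\<rho>k) powr (s-\<sigma>)) powr (1/p) = (\<rho>/\<rho>k) powr E" by (simp add: powr_powr E_def)
      also have "(\<rho>/\<rho>k) powr E \<le> (2 * (3/4)^(m-k)) powr E"
      proof -
        have "\<rho> \<le> 2 * (1 - cmod a)"
        proof -
          have "\<rho> = (1 - cmod a) * (1 + cmod a)" by (simp add: \<rho>_def power2_eq_square algebra_simps)
          also have "\<dots> \<le> (1 - cmod a) * 2" using a1 by (intro mult_left_mono) auto
          finally show ?thesis by simp
        qed
        also have "\<dots> \<le> 2 * (3/4)^m" using m2 by (simp add: T_def)
        finally have r1: "\<rho> \<le> 2 * (3/4)^m" .
        have r2: "(3/4)^k \<le> \<rho>k"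
        proof -
          have "(T k)\<^sup>2 \<le> T k" using Tnn[of k] Tlt[of k] by (simp add: power2_eq_square mult_left_le_one_le)
          then show ?thesis by (simp add: \<rho>k_def T_def)
        qed
        have "\<rho>/\<rho>k \<le> (2 * (3/4)^m) / (3/4)^k"
          using r1 r2 \<rho> by (intro frac_le) auto
        also have "\<dots> = 2 * (3/4)^(m-k)" using km by (simp add: power_diff)
        finally show ?thesis using \<rho> \<rho>kpos E by (intro powr_mono2) auto
      qed
      also have "(2 * (3/4::real)^(m-k)) powr E = 2 powr E * \<theta>^(m-k)"
      proof -
        have "((3/4::real)^(m-k)) powr E = \<theta>^(m-k)"
          by (simp add: \<theta>_def powr_realpow[symmetric] powr_powr mult.commute)
        then show ?thesis by (simp add: powr_mult)
      qed
      finally show "A k \<le> Z * 2 powr E * \<theta>^(m-k)"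
        using mult_left_mono[of _ _ Z] by (auto simp: Z_def mult.assoc)
    qed
    also have "\<dots> = Z * 2 powr E * (\<Sum>k\<le>m. \<theta>^(m-k))" by (simp add: sum_distrib_left)
    also have "\<dots> \<le> Z * 2 powr E * (1 / (1 - \<theta>))"
      using geo_rev_bound[OF \<theta>] by (intro mult_left_mono) (auto simp: Z_def)
    finally show ?thesis by simp
  qed
  have "cmod (f a) \<le> cmod (f 0) + cmod (f a - f 0)" by (metis norm_triangle_sub add.commute)
  also have "\<dots> \<le> (C3 / K 1) powr (1/p) * N powr (1/p) * W powr (1/p) + Z * 2 powr E / (1 - \<theta>)"
    using f0 part0 osc0 by linarith
  also have "Z = (C2*C3) powr (1/p) * N powr (1/p) * W powr (1/p)"
    using C2 C3 W0 N0 by (simp add: Z_def powr_mult mult_ac)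
  finally show ?thesis
    by (simp add: N_def W_def Wf_def \<rho>_def E_def \<theta>_def field_simps)
qed



theorem lemma3p6:
  fixes K :: "real \<Rightarrow> real" and s p \<sigma> :: real and n :: nat
  assumes "0 < s" "s < 1"
    and "standing_K K"
    and "0 < \<sigma>" "\<sigma> < s" "condB K \<sigma>"
    and "1 + \<sigma> - s < p"
  shows "\<exists>C>0. \<forall>f z. in_BpK K p s f \<longrightarrow> z \<in> udisc \<longrightarrow>
           cmod ((deriv ^^ n) f z)
             \<le> C * BpK_norm K p s f *
               (K (1 - (cmod z)\<^sup>2) / (1 - (cmod z)\<^sup>2) powr (p * real n + s)) powr (1 / p)"
proof -
  note K = assms(3)
  have p: "0 < p" using assms by linarith
  have Kpos: "\<And>t. 0 < t \<Longrightarrow> 0 < K t" using standing_KD(3)[OF K] .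
  show ?thesis
  proof (rule phiK_bound[OF K assms(6) assms(4)])
  fix C3 assume C3: "C3 > 0" and C3b: "\<And>x. 1 \<le> x \<Longrightarrow> phiK K x \<le> ennreal (C3 * x powr \<sigma>)"
  have Kr: "\<And>t u. 0 < t \<Longrightarrow> t \<le> u \<Longrightarrow> u \<le> 1 \<Longrightarrow> K u \<le> C3 * (u/t) powr \<sigma> * K t"
    using K_ratio[OF K C3b C3] by blast
  show ?thesis
  proof (rule local_osc[OF p Kpos, where s=s])
  fix C2 assume C2: "C2 > 0" and osc: "\<And>f a w. f holomorphic_on udisc \<Longrightarrow> BpK_normp K p s f < \<infinity> \<Longrightarrow> a \<in> udisc \<Longrightarrow>
     cmod (w - a) \<le> (1 - cmod a)/4 \<Longrightarrow>
     cmod (f w - f a) powr p \<le> C2 * (K (1 - (cmod a)\<^sup>2) / (1 - (cmod a)\<^sup>2) powr s) * enn2real (BpK_normp K p s f)"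
  show ?thesis
  proof (cases "n = 0")
    case True
    define E where "E = (s - \<sigma>) / p"
    define C0 where "C0 = (C3 / K 1) powr (1/p) + (C2*C3) powr (1/p) * 2 powr E / (1 - (3/4) powr E)"
    have E: "0 < E" using assms p by (simp add: E_def)
    have th: "(3/4::real) powr E < 1"
    proof -
      have "(3/4::real) powr E < 1 powr E" using E by (intro powr_less_mono2) auto
      then show ?thesis by simp
    qed
    have C0: "0 < C0"
    proof -
      have "0 < (C3 / K 1) powr (1/p)" using C3 Kpos[of 1] by simp
      moreover have "0 \<le> (C2*C3) powr (1/p) * 2 powr E / (1 - (3/4) powr E)" using th by simp
      ultimately show ?thesis unfolding C0_def by linarith
    qed
    show ?thesis
    proof (intro exI[of _ C0] conjI allI impI C0)
      fix f z assume f: "in_BpK K p s f" and z: "z \<in> udisc"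
      have hol: "f holomorphic_on udisc" and fin: "BpK_normp K p s f < \<infinity>" using f by (auto simp: in_BpK_def)
      have "cmod (f z) \<le> C0 * enn2real (BpK_normp K p s f) powr (1/p) * (K (1 - (cmod z)\<^sup>2) / (1 - (cmod z)\<^sup>2) powr s) powr (1/p)"
        using zero_bound[OF p assms(4,5) C2 C3 osc Kpos Kr hol fin z] by (simp add: C0_def E_def)
      then show "cmod ((deriv ^^ n) f z) \<le> C0 * BpK_norm K p s f *
               (K (1 - (cmod z)\<^sup>2) / (1 - (cmod z)\<^sup>2) powr (p * real n + s)) powr (1 / p)"
        using True by (simp add: BpK_norm_def)
    qed
  next
    case False
    then have n: "0 < n" by simp
    define C where "C = fact n * 8^n * C2 powr (1/p)"
    have Cp: "0 < C" using C2 by (simp add: C_def)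
    show ?thesis
    proof (intro exI[of _ C] conjI allI impI Cp)
      fix f z assume f: "in_BpK K p s f" and z: "z \<in> udisc"
      have hol: "f holomorphic_on udisc" and fin: "BpK_normp K p s f < \<infinity>" using f by (auto simp: in_BpK_def)
      show "cmod ((deriv ^^ n) f z) \<le> C * BpK_norm K p s f *
               (K (1 - (cmod z)\<^sup>2) / (1 - (cmod z)\<^sup>2) powr (p * real n + s)) powr (1 / p)"
        using deriv_n_bound[OF p n C2 osc Kpos hol fin z] by (simp add: C_def BpK_norm_def)
    qed
  qed
  qed
  qed
qed


end
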